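(* Let $W_L$ be a right-angled Coxeter group with nerve $L$, and let $K\subseteq L$ be a full subcomplex. For every $t>0$ and every $q$, the von Neumann dimension of the $U_t(W_L)$-module $L^2_tH^q(W_L\Sigma_K)$ equals $b^q_t(\Sigma_K)$, the von Neumann dimension of the $U_t(W_K)$-module $L^2_tH^q(\Sigma_K)$.
   Context: A Coxeter group is right-angled if any two generators related in the standard presentation commute. Its nerve $L$ is the flag simplicial complex with vertex set $S$ in which simplices correspond to sets of pairwise commuting generators. A subcomplex $K\subseteq L$ is full if it contains every simplex of $L$ all of whose vertices lie in $K$. $W_K$ is the special subgroup generated by the vertices of $K$. The Davis chamber of $W_L$ is $D_L=CL'$ (the cone on the barycentric subdivision of $L$), and that of $W_K$ is $D_K=CK'\subseteq D_L$. Extending this inclusion $W_K$-equivariantly embeds the Davis complex $\Sigma_K$ of $W_K$ into $\Sigma_L$. Then $W_L\Sigma_K=\bigcup_{w\in W_L}w\Sigma_K$, a disjoint union of translates of $\Sigma_K$. For a Coxeter group $W$ with word length $d$: ${\bf C}_t[W]$ has basis $\{\delta_w\}$, inner product $\langle\delta_w,\delta_v\rangle_t=t^{d(w)}$ if $w=v$ and $0$ otherwise, and Hecke multiplication $\delta_w\delta_s=\delta_{ws}$ if $d(ws)>d(w)$, $t\delta_{ws}+(t-1)\delta_w$ otherwise. $L^2_t(W)$ is its completion. $U_t(W)$ and $V_t(W)$ are the von Neumann algebras generated by left, respectively right, multiplications. The trace of right multiplication by $b$ is the $\delta_1$-coefficient of $b$, summed over diagonal entries of matrices. Cochains. On a subcomplex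 $Y$ of the Davis complex $\Sigma$ of $W$ that is a union of $W$-translates of a subcomplex $E$ of the chamber $D$, the space $L^2_tC^q(Y)$ consists of $q$-cochains square-summable for the weight $t^{d(\sigma)}$, where $d(\sigma)=\min\{d(w):\sigma\subseteq wD\}$. The coboundary is $\delta$, with adjoint $\partial^tf(\eta)=\sum_{\sigma\supset\eta}[\eta:\sigma]t^{d(\sigma)-d(\eta)}f(\sigma)$. $L^2_tH^q(Y)$ is identified with the harmonic cochains $\ker\delta\cap\ker\partial^t$. Cochains embed in $\bigoplus_{\sigma\in E^{(q)}}L^2_t(W)$ via $f\mapsto W_{T(\sigma)}(t)^{-1/2}\sum_wf(w\sigma)\delta_w$, where $T(\sigma)$ is the largest $T$ with $\sigma\subseteq D_T$ and $W_T(x)=\sum_{u\in W_T}x^{d(u)}$. Dimension. The dimension of the module is the trace of the orthogonal projection onto the image of the harmonic cochains. $b^q_t(\Sigma_K)$ is this quantity for $Y=\Sigma_K$ and $W=W_K$. *)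

theory Defs
  imports "HOL-Analysis.Analysis"
begin

text \<open>Generators: a set S; commuting relation E (the edges of the nerve).  Group elements are equivalence classes
  of words.\<close>

definition rac_step :: "'a set \<Rightarrow> ('a \<Rightarrow> 'a \<Rightarrow> bool) \<Rightarrow> 'a list \<Rightarrow> 'a list \<Rightarrow> bool" where
  "rac_step S E xs ys \<longleftrightarrow>
     (\<exists>a b s. s \<in> S \<and> xs = a @ [s, s] @ b \<and> ys = a @ b) \<or>
     (\<exists>a b s u. s \<in> S \<and> u \<in> S \<and> E s u \<and> xs = a @ [s, u] @ b \<and> ys = a @ [u, s] @ b)"

definition rac_eq :: "'a set \<Rightarrow> ('a \<Rightarrow> 'a \<Rightarrow> bool) \<Rightarrow> 'a list \<Rightarrow> 'a list \<Rightarrow> bool" where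
  "rac_eq S E xs ys \<longleftrightarrow> xs \<in> lists S \<and> ys \<in> lists S \<and>
     (\<lambda>x y. rac_step S E x y \<or> rac_step S E y x)\<^sup>*\<^sup>* xs ys"

definition rac_cls :: "'a set \<Rightarrow> ('a \<Rightarrow> 'a \<Rightarrow> bool) \<Rightarrow> 'a list \<Rightarrow> 'a list set" where
  "rac_cls S E xs = {ys. rac_eq S E xs ys}"

definition rac_grp :: "'a set \<Rightarrow> ('a \<Rightarrow> 'a \<Rightarrow> bool) \<Rightarrow> 'a list set set" where
  "rac_grp S E = rac_cls S E ` lists S"

definition rac_one :: "'a set \<Rightarrow> ('a \<Rightarrow> 'a \<Rightarrow> bool) \<Rightarrow> 'a list set" where
  "rac_one S E = rac_cls S E []"

definition rac_len :: "'a set \<Rightarrow> ('a \<Rightarrow> 'a \<Rightarrow> bool) \<Rightarrow> 'a list set \<Rightarrow> nat" where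
  "rac_len S E w = (LEAST n. \<exists>xs\<in>w. length xs = n)"

definition special :: "'a set \<Rightarrow> ('a \<Rightarrow> 'a \<Rightarrow> bool) \<Rightarrow> 'a set \<Rightarrow> 'a list set set" where
  "special S E T = rac_cls S E ` lists T"

definition rac_coset :: "'a set \<Rightarrow> ('a \<Rightarrow> 'a \<Rightarrow> bool) \<Rightarrow> 'a list set \<Rightarrow> 'a set \<Rightarrow> 'a list set set" where
  "rac_coset S E w T = {rac_cls S E (xs @ ys) | xs ys. xs \<in> w \<and> ys \<in> lists T}"

definition poincare :: "'a set \<Rightarrow> ('a \<Rightarrow> 'a \<Rightarrow> bool) \<Rightarrow> 'a set \<Rightarrow> real \<Rightarrow> real" where
  "poincare S E T x = (\<Sum>u\<in>special S E T. x ^ rac_len S E u)"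

definition nerve :: "'a set \<Rightarrow> ('a \<Rightarrow> 'a \<Rightarrow> bool) \<Rightarrow> 'a set set" where
  "nerve S E = {T. T \<noteq> {} \<and> finite T \<and> T \<subseteq> S \<and> (\<forall>s\<in>T. \<forall>u\<in>T. s \<noteq> u \<longrightarrow> E s u)}"

definition subcomplex :: "'a set set \<Rightarrow> 'a set set \<Rightarrow> bool" where
  "subcomplex K L \<longleftrightarrow> K \<subseteq> L \<and> (\<forall>\<sigma>\<in>K. \<forall>\<tau>. \<tau> \<noteq> {} \<and> \<tau> \<subseteq> \<sigma> \<longrightarrow> \<tau> \<in> K)"

definition full_subcomplex :: "'a set set \<Rightarrow> 'a set set \<Rightarrow> bool" where
  "full_subcomplex K L \<longleftrightarrow> subcomplex K L \<and> (\<forall>\<sigma>\<in>L. \<sigma> \<subseteq> \<Union>K \<longrightarrow> \<sigma> \<in> K)"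

text \<open>The chamber D = C K' is the realization of the poset P of simplices of K
  together with the empty set (the cone point).  Its q-simplices are strict
  chains T0 < ... < Tq in P.  The q-simplices of W D are the chains of cosets
  w W_T0 < ... < w W_Tq, represented as lists of cosets.\<close>
definition chamber_chains :: "'a set set \<Rightarrow> nat \<Rightarrow> 'a set list set" where
  "chamber_chains P q = {Ts. length Ts = Suc q \<and> set Ts \<subseteq> P \<and> sorted_wrt (\<subset>) Ts}"

definition cells :: "'a set \<Rightarrow> ('a \<Rightarrow> 'a \<Rightarrow> bool) \<Rightarrow> 'a set set \<Rightarrow> nat \<Rightarrow> 'a list set set list set" where
  "cells S E P q = {map (rac_coset S E w) Ts | w Ts. w \<in> rac_grp S E \<and> Ts \<in> chamber_chains P q}"

text \<open>d(sigma) = min d(w) over w with sigma contained in wD, i.e. w lies in every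
  vertex (coset) of sigma.\<close>
definition cell_deg :: "'a set \<Rightarrow> ('a \<Rightarrow> 'a \<Rightarrow> bool) \<Rightarrow> 'a list set set list \<Rightarrow> nat" where
  "cell_deg S E \<sigma> = (LEAST n. \<exists>w\<in>rac_grp S E. (\<forall>C\<in>set \<sigma>. w \<in> C) \<and> rac_len S E w = n)"

definition del_nth :: "nat \<Rightarrow> 'b list \<Rightarrow> 'b list" where
  "del_nth i xs = take i xs @ drop (Suc i) xs"

definition cob :: "('b list \<Rightarrow> real) \<Rightarrow> 'b list \<Rightarrow> real" where
  "cob f \<sigma> = (\<Sum>i<length \<sigma>. (-1) ^ i * f (del_nth i \<sigma>))"

text \<open>The adjoint partial^t of the coboundary, on q-cochains.\<close>
definition bd_t :: "'a set \<Rightarrow> ('a \<Rightarrow> 'a \<Rightarrow> bool) \<Rightarrow> 'a set set \<Rightarrow> real \<Rightarrow> nat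
    \<Rightarrow> ('a list set set list \<Rightarrow> real) \<Rightarrow> 'a list set set list \<Rightarrow> real" where
  "bd_t S E P t q f \<eta> =
     (\<Sum>(\<sigma>, i) \<in> {(\<sigma>, i). \<sigma> \<in> cells S E P q \<and> i < length \<sigma> \<and> del_nth i \<sigma> = \<eta>}.
        (-1) ^ i * t powr (real (cell_deg S E \<sigma>) - real (cell_deg S E \<eta>)) * f \<sigma>)"

definition l2_cochains :: "'a set \<Rightarrow> ('a \<Rightarrow> 'a \<Rightarrow> bool) \<Rightarrow> 'a set set \<Rightarrow> real \<Rightarrow> nat
    \<Rightarrow> ('a list set set list \<Rightarrow> real) set" where
  "l2_cochains S E P t q = {f. (\<forall>\<sigma>. \<sigma> \<notin> cells S E P q \<longrightarrow> f \<sigma> = 0) \<and>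
     (\<lambda>\<sigma>. (f \<sigma>)\<^sup>2 * t ^ cell_deg S E \<sigma>) summable_on cells S E P q}"

definition harmonic :: "'a set \<Rightarrow> ('a \<Rightarrow> 'a \<Rightarrow> bool) \<Rightarrow> 'a set set \<Rightarrow> real \<Rightarrow> nat
    \<Rightarrow> ('a list set set list \<Rightarrow> real) set" where
  "harmonic S E P t q = {f \<in> l2_cochains S E P t q.
      (\<forall>\<sigma>\<in>cells S E P (Suc q). cob f \<sigma> = 0) \<and>
      (0 < q \<longrightarrow> (\<forall>\<eta>\<in>cells S E P (q - 1). bd_t S E P t q f \<eta> = 0))}"

text \<open>Elements of the direct sum over sigma in E^(q) of L^2_t(W) are functions on
  pairs (sigma, w).  T(sigma) is the minimal element hd Ts of the chain.\<close>
definition embed :: "'a set \<Rightarrow> ('a \<Rightarrow> 'a \<Rightarrow> bool) \<Rightarrow> 'a set set \<Rightarrow> real \<Rightarrow> nat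
    \<Rightarrow> ('a list set set list \<Rightarrow> real) \<Rightarrow> ('a set list \<times> 'a list set \<Rightarrow> real)" where
  "embed S E P t q f = (\<lambda>(Ts, w).
     if Ts \<in> chamber_chains P q \<and> w \<in> rac_grp S E
     then poincare S E (hd Ts) t powr (-1/2) * f (map (rac_coset S E w) Ts) else 0)"

definition hecke_ip :: "'a set \<Rightarrow> ('a \<Rightarrow> 'a \<Rightarrow> bool) \<Rightarrow> 'a set set \<Rightarrow> real \<Rightarrow> nat
    \<Rightarrow> ('a set list \<times> 'a list set \<Rightarrow> real) \<Rightarrow> ('a set list \<times> 'a list set \<Rightarrow> real) \<Rightarrow> real" where
  "hecke_ip S E P t q g h =
     (\<Sum>\<^sub>\<infinity>(Ts, w) \<in> chamber_chains P q \<times> rac_grp S E. g (Ts, w) * h (Ts, w) * t ^ rac_len S E w)"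

definition orth_proj :: "(('c \<Rightarrow> real) \<Rightarrow> ('c \<Rightarrow> real) \<Rightarrow> real) \<Rightarrow> ('c \<Rightarrow> real) set
    \<Rightarrow> ('c \<Rightarrow> real) \<Rightarrow> ('c \<Rightarrow> real)" where
  "orth_proj ip M x = (THE y. y \<in> M \<and> (\<forall>h\<in>M. ip (\<lambda>p. x p - y p) h = 0))"

definition delta_one :: "'a set \<Rightarrow> ('a \<Rightarrow> 'a \<Rightarrow> bool) \<Rightarrow> 'a set list
    \<Rightarrow> ('a set list \<times> 'a list set \<Rightarrow> real)" where
  "delta_one S E Ts0 = (\<lambda>(Ts, w). if Ts = Ts0 \<and> w = rac_one S E then 1 else 0)"

text \<open>Von Neumann dimension: trace of the orthogonal projection onto the image
  of the harmonic cochains, i.e. the sum over the diagonal entries of the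
  delta_1-coefficients.\<close>
definition l2_betti :: "'a set \<Rightarrow> ('a \<Rightarrow> 'a \<Rightarrow> bool) \<Rightarrow> 'a set set \<Rightarrow> real \<Rightarrow> nat \<Rightarrow> real" where
  "l2_betti S E P t q =
     (let ip = hecke_ip S E P t q;
          M = embed S E P t q ` harmonic S E P t q
      in \<Sum>Ts\<in>chamber_chains P q. ip (orth_proj ip M (delta_one S E Ts)) (delta_one S E Ts))"

end

theory Submission
  imports Defs
begin

lemma rtranclp_map_gen:
  assumes "\<And>x y. r x y \<Longrightarrow> r' (f x) (f y)" "r\<^sup>*\<^sup>* x y"
  shows "r'\<^sup>*\<^sup>* (f x) (f y)"
  using assms(2)
proof (induction rule: rtranclp_induct)
  case base then show ?case by simp
next
  case (step y z) then show ?case using assms(1)[of y z] by (meson rtranclp.rtrancl_into_rtrancl)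
qed

lemma rtranclp_sym_gen:
  assumes "\<And>x y. r x y \<Longrightarrow> r y x" "r\<^sup>*\<^sup>* x y"
  shows "r\<^sup>*\<^sup>* y x"
  using assms(2)
proof (induction rule: rtranclp_induct)
  case base then show ?case by simp
next
  case (step y z) then show ?case using assms(1)[of y z] by (meson converse_rtranclp_into_rtranclp)
qed

lemma rac_step_lists: "rac_step S E xs ys \<Longrightarrow> xs \<in> lists S \<longleftrightarrow> ys \<in> lists S"
  unfolding rac_step_def by (elim disjE exE conjE) auto

lemma rac_step_cong: "rac_step S E xs ys \<Longrightarrow> rac_step S E (a @ xs @ b) (a @ ys @ b)"
proof (unfold rac_step_def, elim disjE exE conjE)
  fix a' b' s assume "s \<in> S" "xs = a' @ [s, s] @ b'" "ys = a' @ b'"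
  then have "\<exists>a'' b'' s. s \<in> S \<and> a @ xs @ b = a'' @ [s, s] @ b'' \<and> a @ ys @ b = a'' @ b''"
    by (intro exI[of _ "a @ a'"] exI[of _ "b' @ b"] exI[of _ s]) simp
  then show "(\<exists>a'' b'' s. s \<in> S \<and> a @ xs @ b = a'' @ [s, s] @ b'' \<and> a @ ys @ b = a'' @ b'') \<or>
    (\<exists>a'' b'' s u. s \<in> S \<and> u \<in> S \<and> E s u \<and> a @ xs @ b = a'' @ [s, u] @ b'' \<and> a @ ys @ b = a'' @ [u, s] @ b'')" by (rule disjI1)
next
  fix a' b' s u assume "s \<in> S" "u \<in> S" "E s u" "xs = a' @ [s, u] @ b'" "ys = a' @ [u, s] @ b'"
  then have "\<exists>a'' b'' s u. s \<in> S \<and> u \<in> S \<and> E s u \<and> a @ xs @ b = a'' @ [s, u] @ b'' \<and> a @ ys @ b = a'' @ [u, s] @ b''"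
    by (intro exI[of _ "a @ a'"] exI[of _ "b' @ b"] exI[of _ s] exI[of _ u]) simp
  then show "(\<exists>a'' b'' s. s \<in> S \<and> a @ xs @ b = a'' @ [s, s] @ b'' \<and> a @ ys @ b = a'' @ b'') \<or>
    (\<exists>a'' b'' s u. s \<in> S \<and> u \<in> S \<and> E s u \<and> a @ xs @ b = a'' @ [s, u] @ b'' \<and> a @ ys @ b = a'' @ [u, s] @ b'')" by (rule disjI2)
qed

lemma rac_eq_refl: "xs \<in> lists S \<Longrightarrow> rac_eq S E xs xs"
  unfolding rac_eq_def by auto

lemma rac_eq_sym: "rac_eq S E xs ys \<Longrightarrow> rac_eq S E ys xs"
  unfolding rac_eq_def using rtranclp_sym_gen[of "\<lambda>x y. rac_step S E x y \<or> rac_step S E y x"] by blast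

lemma rac_eq_trans: "rac_eq S E xs ys \<Longrightarrow> rac_eq S E ys zs \<Longrightarrow> rac_eq S E xs zs"
  unfolding rac_eq_def by auto

lemma rac_eq_lists: "rac_eq S E xs ys \<Longrightarrow> xs \<in> lists S \<and> ys \<in> lists S"
  unfolding rac_eq_def by auto

lemma rac_eq_cong:
  assumes "rac_eq S E xs ys" "a \<in> lists S" "b \<in> lists S"
  shows "rac_eq S E (a @ xs @ b) (a @ ys @ b)"
proof -
  have st: "(\<lambda>x y. rac_step S E x y \<or> rac_step S E y x)\<^sup>*\<^sup>* xs ys" using assms(1) by (simp add: rac_eq_def)
  have "(\<lambda>x y. rac_step S E x y \<or> rac_step S E y x)\<^sup>*\<^sup>* ((\<lambda>x. a @ x @ b) xs) ((\<lambda>x. a @ x @ b) ys)"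
  proof (rule rtranclp_map_gen[OF _ st])
    fix x y assume "rac_step S E x y \<or> rac_step S E y x"
    then show "rac_step S E ((\<lambda>x. a @ x @ b) x) ((\<lambda>x. a @ x @ b) y) \<or> rac_step S E ((\<lambda>x. a @ x @ b) y) ((\<lambda>x. a @ x @ b) x)"
      using rac_step_cong[of S E x y a b] rac_step_cong[of S E y x a b] by blast
  qed
  then show ?thesis using assms unfolding rac_eq_def by auto
qed

lemma rac_eq_cong_r: "rac_eq S E xs ys \<Longrightarrow> b \<in> lists S \<Longrightarrow> rac_eq S E (xs @ b) (ys @ b)"
  using rac_eq_cong[of S E xs ys "[]" b] by auto

lemma rac_eq_step: "rac_step S E xs ys \<Longrightarrow> xs \<in> lists S \<Longrightarrow> rac_eq S E xs ys"
  unfolding rac_eq_def using rac_step_lists[of S E xs ys] by auto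

lemma rac_eq_cancel2: assumes "s \<in> S" shows "rac_eq S E [s, s] []"
proof (rule rac_eq_step)
  show "rac_step S E [s, s] []" using assms unfolding rac_step_def
    by (intro disjI1 exI[of _ "[]"] exI[of _ "[]"] exI[of _ s]) simp
  show "[s, s] \<in> lists S" using assms by simp
qed

lemma rac_eq_cancel: "xs \<in> lists S \<Longrightarrow> rac_eq S E (xs @ rev xs) []"
proof (induction xs)
  case Nil then show ?case by (simp add: rac_eq_refl)
next
  case (Cons x xs)
  have "rac_eq S E ([x] @ (xs @ rev xs) @ [x]) ([x] @ [] @ [x])"
    using Cons by (intro rac_eq_cong) auto
  moreover have "rac_eq S E [x, x] []" using Cons by (intro rac_eq_cancel2) auto
  ultimately show ?case using rac_eq_trans[of S E "[x] @ (xs @ rev xs) @ [x]" "[x,x]" "[]"] by simp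
qed

lemma rac_eq_cancel_r: "xs \<in> lists S \<Longrightarrow> ys \<in> lists S \<Longrightarrow> rac_eq S E (xs @ ys @ rev ys) xs"
  using rac_eq_cong[OF rac_eq_cancel[of ys S E], of xs "[]"] by auto

lemma mem_rac_cls: "ys \<in> rac_cls S E xs \<longleftrightarrow> rac_eq S E xs ys"
  unfolding rac_cls_def by auto

lemma rac_cls_eq_iff: "xs \<in> lists S \<Longrightarrow> rac_cls S E xs = rac_cls S E ys \<longleftrightarrow> rac_eq S E xs ys"
proof
  assume a: "xs \<in> lists S" "rac_cls S E xs = rac_cls S E ys"
  have "xs \<in> rac_cls S E xs" using a(1) by (simp add: mem_rac_cls rac_eq_refl)
  then have "xs \<in> rac_cls S E ys" using a(2) by simp
  then have "rac_eq S E ys xs" by (simp add: mem_rac_cls)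
  then show "rac_eq S E xs ys" by (rule rac_eq_sym)
next
  assume r: "rac_eq S E xs ys"
  show "rac_cls S E xs = rac_cls S E ys"
  proof (rule set_eqI)
    fix zs
    show "zs \<in> rac_cls S E xs \<longleftrightarrow> zs \<in> rac_cls S E ys"
      unfolding mem_rac_cls using r rac_eq_sym[OF r] rac_eq_trans[of S E xs ys zs] rac_eq_trans[of S E ys xs zs] by blast
  qed
qed

lemma rac_cls_eqI: assumes r: "rac_eq S E xs ys" shows "rac_cls S E xs = rac_cls S E ys"
proof -
  have "xs \<in> lists S" using rac_eq_lists[OF r] by (rule conjunct1)
  then have "rac_cls S E xs = rac_cls S E ys \<longleftrightarrow> rac_eq S E xs ys" by (rule rac_cls_eq_iff)
  from this r show ?thesis by (rule iffD2)
qed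

lemma rac_cls_self: "xs \<in> lists S \<Longrightarrow> xs \<in> rac_cls S E xs"
  unfolding mem_rac_cls by (rule rac_eq_refl)

lemma rac_grp_mem: "w \<in> rac_grp S E \<Longrightarrow> xs \<in> w \<Longrightarrow> w = rac_cls S E xs \<and> xs \<in> lists S"
proof -
  assume a: "w \<in> rac_grp S E" "xs \<in> w"
  then obtain ys where w: "w = rac_cls S E ys" unfolding rac_grp_def by blast
  have r: "rac_eq S E ys xs" using a(2) unfolding w mem_rac_cls .
  show ?thesis using w rac_cls_eqI[OF r] rac_eq_lists[OF r] by (intro conjI) auto
qed

lemma rac_grp_ne: assumes "w \<in> rac_grp S E" shows "\<exists>xs. xs \<in> w"
proof -
  obtain ys where ys: "ys \<in> lists S" "w = rac_cls S E ys" using assms unfolding rac_grp_def by blast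
  have "ys \<in> rac_cls S E ys" using ys(1) by (rule rac_cls_self)
  then have "ys \<in> w" using ys(2) by simp
  then show ?thesis by (rule exI)
qed

lemma rac_cls_in_grp: "xs \<in> lists S \<Longrightarrow> rac_cls S E xs \<in> rac_grp S E"
  unfolding rac_grp_def by (rule imageI)

lemma rac_eq_move:
  assumes "s \<in> S" "set b \<subseteq> S" "\<forall>u\<in>set b. u = s \<or> E s u" "a \<in> lists S" "c \<in> lists S"
  shows "rac_eq S E (a @ [s] @ b @ c) (a @ b @ [s] @ c)"
  using assms
proof (induction b arbitrary: a)
  case Nil
  then show ?case by (simp add: rac_eq_refl)
next
  case (Cons u b)
  have 1: "rac_eq S E (a @ [s] @ (u # b) @ c) ((a @ [u]) @ [s] @ b @ c)"
  proof (cases "u = s")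
    case True then show ?thesis using Cons.prems by - (simp, rule rac_eq_refl, auto)
  next
    case False
    then have "E s u" using Cons.prems by simp
    then have "rac_step S E (a @ [s, u] @ (b @ c)) (a @ [u, s] @ (b @ c))"
      unfolding rac_step_def using Cons.prems
      by (intro disjI2 exI[of _ a] exI[of _ "b @ c"] exI[of _ s] exI[of _ u]) simp
    then show ?thesis using Cons.prems by (intro rac_eq_step) (simp_all add: lists_eq_set)
  qed
  have 2: "rac_eq S E ((a @ [u]) @ [s] @ b @ c) ((a @ [u]) @ b @ [s] @ c)"
    using Cons.prems by (intro Cons.IH) simp_all
  show ?case using rac_eq_trans[OF 1 2] by simp
qed

lemma clique_reduce:
  assumes "T \<subseteq> S" "\<And>s u. s \<in> T \<Longrightarrow> u \<in> T \<Longrightarrow> s \<noteq> u \<Longrightarrow> E s u" "ys \<in> lists T"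
  shows "\<exists>zs. distinct zs \<and> set zs \<subseteq> T \<and> rac_eq S E ys zs"
  using assms(3)
proof (induction "length ys" arbitrary: ys rule: less_induct)
  case less
  show ?case
  proof (cases "distinct ys")
    case True
    then show ?thesis using less.prems assms(1) by (intro exI[of _ ys]) (auto intro!: rac_eq_refl)
  next
    case False
    then obtain a x b c where ys: "ys = a @ [x] @ b @ [x] @ c" using not_distinct_decomp by blast
    have xT: "x \<in> T" and bT: "set b \<subseteq> T" and aT: "set a \<subseteq> T" and cT: "set c \<subseteq> T"
      using less.prems ys by auto
    have bx: "\<forall>u\<in>set b. u = x \<or> E x u" using assms(2)[of x] xT bT by blast
    have 1: "rac_eq S E ys (a @ b @ [x] @ ([x] @ c))"
      unfolding ys using xT bT aT cT assms(1) bx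
      by (intro rac_eq_move) (auto simp: lists_eq_set)
    have 2: "rac_eq S E ((a @ b) @ [x, x] @ c) ((a @ b) @ [] @ c)"
      using aT bT cT xT assms(1) by (intro rac_eq_cong rac_eq_cancel2) (auto simp: lists_eq_set)
    have 3: "rac_eq S E ys (a @ b @ c)" using rac_eq_trans[OF 1] 2 by simp
    have "length (a @ b @ c) < length ys" using ys by simp
    moreover have "a @ b @ c \<in> lists T" using aT bT cT by auto
    ultimately obtain zs where zs: "distinct zs" "set zs \<subseteq> T" "rac_eq S E (a @ b @ c) zs"
      using less.hyps by blast
    show ?thesis using zs rac_eq_trans[OF 3 zs(3)] by blast
  qed
qed

lemma rac_coset_eq:
  assumes w: "w \<in> rac_grp S E" and xs: "xs \<in> w" and T: "T \<subseteq> S"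
  shows "rac_coset S E w T = {rac_cls S E (xs @ ys) | ys. ys \<in> lists T}"
proof (rule set_eqI)
  fix v
  have wx: "w = rac_cls S E xs" "xs \<in> lists S" using rac_grp_mem[OF w xs] by auto
  show "v \<in> rac_coset S E w T \<longleftrightarrow> v \<in> {rac_cls S E (xs @ ys) | ys. ys \<in> lists T}"
  proof
    assume "v \<in> rac_coset S E w T"
    then obtain xs' ys where v: "v = rac_cls S E (xs' @ ys)" "xs' \<in> w" "ys \<in> lists T"
      unfolding rac_coset_def by blast
    have "rac_eq S E xs xs'" using v(2) unfolding wx(1) mem_rac_cls .
    moreover have "ys \<in> lists S" using v(3) T by auto
    ultimately have "rac_eq S E (xs' @ ys) (xs @ ys)" using rac_eq_cong_r rac_eq_sym by blast
    then have "rac_cls S E (xs' @ ys) = rac_cls S E (xs @ ys)" by (rule rac_cls_eqI)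
    then have "v = rac_cls S E (xs @ ys)" using v(1) by simp
    then show "v \<in> {rac_cls S E (xs @ ys) | ys. ys \<in> lists T}" using v(3) by blast
  next
    assume "v \<in> {rac_cls S E (xs @ ys) | ys. ys \<in> lists T}"
    then show "v \<in> rac_coset S E w T" unfolding rac_coset_def using xs by blast
  qed
qed

lemma rac_coset_self:
  assumes w: "w \<in> rac_grp S E" shows "w \<in> rac_coset S E w T"
proof -
  obtain xs where xs: "xs \<in> w" using rac_grp_ne[OF w] by blast
  have "w = rac_cls S E (xs @ [])" using rac_grp_mem[OF w xs] by simp
  then show ?thesis unfolding rac_coset_def using xs by blast
qed

lemma rac_coset_mem:
  assumes w: "w \<in> rac_grp S E" and xs: "xs \<in> w" and T: "T \<subseteq> S" and v: "v \<in> rac_coset S E w T"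
  shows "\<exists>ys \<in> lists T. v = rac_cls S E (xs @ ys)"
  using v unfolding rac_coset_eq[OF w xs T] by blast

lemma rac_coset_sub:
  assumes w: "w \<in> rac_grp S E" and T: "T \<subseteq> S"
  shows "rac_coset S E w T \<subseteq> rac_grp S E"
proof
  fix v assume v: "v \<in> rac_coset S E w T"
  obtain xs where xs: "xs \<in> w" using rac_grp_ne[OF w] by blast
  obtain ys where ys: "ys \<in> lists T" "v = rac_cls S E (xs @ ys)" using rac_coset_mem[OF w xs T v] by blast
  have "xs @ ys \<in> lists S" using rac_grp_mem[OF w xs] ys(1) T by auto
  then show "v \<in> rac_grp S E" unfolding ys(2) by (rule rac_cls_in_grp)
qed

lemma rac_len_le: "xs \<in> w \<Longrightarrow> rac_len S E w \<le> length xs"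
  unfolding rac_len_def by (rule Least_le) blast

lemma rac_len_ex: assumes "w \<in> rac_grp S E" shows "\<exists>xs\<in>w. length xs = rac_len S E w"
proof -
  obtain xs where "xs \<in> w" using rac_grp_ne[OF assms] by blast
  then have "\<exists>n. \<exists>xs\<in>w. length xs = n" by blast
  then show ?thesis unfolding rac_len_def by (rule LeastI_ex)
qed

locale racg =
  fixes S :: "'a set" and E :: "'a \<Rightarrow> 'a \<Rightarrow> bool" and P :: "'a set set" and t :: real
  assumes finS: "finite S" and finP: "finite P"
    and P_sub: "\<And>T. T \<in> P \<Longrightarrow> T \<subseteq> S"
    and P_clique: "\<And>T s u. T \<in> P \<Longrightarrow> s \<in> T \<Longrightarrow> u \<in> T \<Longrightarrow> s \<noteq> u \<Longrightarrow> E s u"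
    and tpos: "t > 0"
begin

abbreviation "G \<equiv> rac_grp S E"
abbreviation "D \<equiv> {zs. set zs \<subseteq> S \<and> distinct zs}"

lemma finD: "finite D"
  using finite_subset_distinct[OF finS] .

lemma reduce_P:
  assumes "T \<in> P" "ys \<in> lists T"
  shows "\<exists>zs. distinct zs \<and> set zs \<subseteq> T \<and> rac_eq S E ys zs"
  using clique_reduce[OF P_sub[OF assms(1)] _ assms(2)] P_clique[OF assms(1)] by blast

lemma coset_reduce:
  assumes w: "w \<in> G" and xs: "xs \<in> w" and T: "T \<in> P" and v: "v \<in> rac_coset S E w T"
  shows "\<exists>zs. distinct zs \<and> set zs \<subseteq> T \<and> v = rac_cls S E (xs @ zs)"
proof -
  obtain ys where ys: "ys \<in> lists T" "v = rac_cls S E (xs @ ys)"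
    using rac_coset_mem[OF w xs P_sub[OF T] v] by blast
  obtain zs where zs: "distinct zs" "set zs \<subseteq> T" "rac_eq S E ys zs" using reduce_P[OF T ys(1)] by blast
  have eq: "rac_eq S E (xs @ ys) (xs @ zs)"
    using rac_eq_cong[OF zs(3), of xs "[]"] rac_grp_mem[OF w xs] by simp
  have "v = rac_cls S E (xs @ zs)" using ys(2) rac_cls_eqI[OF eq] by simp
  then show ?thesis using zs by blast
qed

lemma deg_bound:
  assumes w: "w \<in> G" and Ts: "Ts \<noteq> []" "set Ts \<subseteq> P"
  shows "cell_deg S E (map (rac_coset S E w) Ts) \<le> rac_len S E w"
    and "rac_len S E w \<le> cell_deg S E (map (rac_coset S E w) Ts) + card S"
proof -
  let ?\<sigma> = "map (rac_coset S E w) Ts"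
  let ?Q = "\<lambda>n. \<exists>w'\<in>G. (\<forall>C\<in>set ?\<sigma>. w' \<in> C) \<and> rac_len S E w' = n"
  have ex: "?Q (rac_len S E w)" using w rac_coset_self[OF w] by auto
  show "cell_deg S E ?\<sigma> \<le> rac_len S E w" unfolding cell_deg_def by (rule Least_le) (rule ex)
  have "?Q (cell_deg S E ?\<sigma>)" unfolding cell_deg_def by (rule LeastI) (rule ex)
  then obtain w0 where w0: "w0 \<in> G" "\<forall>C\<in>set ?\<sigma>. w0 \<in> C" "rac_len S E w0 = cell_deg S E ?\<sigma>" by blast
  have T0: "hd Ts \<in> P" using Ts by (cases Ts) auto
  have "rac_coset S E w (hd Ts) \<in> set ?\<sigma>" using Ts by (cases Ts) auto
  then have w0c: "w0 \<in> rac_coset S E w (hd Ts)" using w0(2) by blast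
  obtain xs where xs: "xs \<in> w" using rac_grp_ne[OF w] by blast
  have xsS: "xs \<in> lists S" using rac_grp_mem[OF w xs] by simp
  obtain zs where zs: "distinct zs" "set zs \<subseteq> hd Ts" "w0 = rac_cls S E (xs @ zs)"
    using coset_reduce[OF w xs T0 w0c] by blast
  have zsS: "zs \<in> lists S" using zs(2) P_sub[OF T0] by auto
  obtain xs0 where xs0: "xs0 \<in> w0" "length xs0 = rac_len S E w0" using rac_len_ex[OF w0(1)] by blast
  have r1: "rac_eq S E (xs @ zs) xs0" using xs0(1) unfolding zs(3) mem_rac_cls .
  have r2: "rac_eq S E ((xs @ zs) @ rev zs) (xs0 @ rev zs)" using r1 zsS by (intro rac_eq_cong_r) auto
  have r3: "rac_eq S E (xs @ zs @ rev zs) xs" using xsS zsS by (rule rac_eq_cancel_r)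
  have "rac_eq S E xs (xs0 @ rev zs)" using rac_eq_trans[OF rac_eq_sym[OF r3]] r2 by simp
  moreover have wcls: "w = rac_cls S E xs" using rac_grp_mem[OF w xs] by simp
  ultimately have "xs0 @ rev zs \<in> w" unfolding wcls mem_rac_cls by simp
  then have "rac_len S E w \<le> length (xs0 @ rev zs)" by (rule rac_len_le)
  then have "rac_len S E w \<le> length xs0 + length zs" by simp
  moreover have "length zs \<le> card S"
  proof -
    have "set zs \<subseteq> S" using zs(2) P_sub[OF T0] by blast
    then have "card (set zs) \<le> card S" by (rule card_mono[OF finS])
    then show ?thesis using distinct_card[OF zs(1)] by simp
  qed
  ultimately show "rac_len S E w \<le> cell_deg S E ?\<sigma> + card S" using xs0(2) w0(3) by simp
qed

lemma fiber_sub: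
  assumes w: "w \<in> G" and xs: "xs \<in> w" and Ts: "Ts \<noteq> []" "set Ts \<subseteq> P"
    and w': "w' \<in> G" and eq: "map (rac_coset S E w') Ts = map (rac_coset S E w) Ts"
  shows "w' \<in> (\<lambda>zs. rac_cls S E (xs @ zs)) ` D"
proof -
  have T0: "hd Ts \<in> P" using Ts by (cases Ts) auto
  have "rac_coset S E w' (hd Ts) = rac_coset S E w (hd Ts)"
    using eq Ts by (cases Ts) auto
  moreover have "w' \<in> rac_coset S E w' (hd Ts)" by (rule rac_coset_self[OF w'])
  ultimately have "w' \<in> rac_coset S E w (hd Ts)" by simp
  then obtain zs where zs: "distinct zs" "set zs \<subseteq> hd Ts" "w' = rac_cls S E (xs @ zs)"
    using coset_reduce[OF w xs T0] by blast
  then show ?thesis using P_sub[OF T0] by auto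
qed

end

lemma sq_bound_r1: "((a::real)*x + b*y)*(a*x + b*y) \<le> 2*a*a*(x*x) + 2*b*b*(y*y)"
proof -
  have e: "(a*x+b*y)*(a*x+b*y) + (a*x-b*y)*(a*x-b*y) = 2*a*a*(x*x) + 2*b*b*(y*y)"
    by (simp add: algebra_simps)
  have "0 \<le> (a*x-b*y)*(a*x-b*y)" by simp
  then show ?thesis using e by linarith
qed

lemma quad_zero_r2: assumes "\<And>l::real. 2*l*c \<le> l*l*A" "0 \<le> A" shows "c = 0"
proof -
  define k where "k = 1/(A+1)"
  have k0: "0 < k" using assms(2) by (simp add: k_def)
  have kA: "k*A \<le> 1" using assms(2) by (simp add: k_def field_simps)
  have 1: "2*(c*k)*c \<le> (c*k)*(c*k)*A" by (rule assms(1))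
  have 2: "(c*k)*(c*k)*A = (c*c*k)*(k*A)" by (simp add: algebra_simps)
  have cck: "0 \<le> c*c*k" using k0 by simp
  have 3: "(c*c*k)*(k*A) \<le> (c*c*k)*1" by (rule mult_left_mono[OF kA cck])
  have 4: "2*(c*k)*c = 2*(c*c*k)" by (simp add: algebra_simps)
  have "c*c*k \<le> 0" using 1 2 3 4 by linarith
  then have "c*c*k = 0" using cck by linarith
  then show ?thesis using k0 by simp
qed

definition l2w :: "'c set \<Rightarrow> ('c \<Rightarrow> real) \<Rightarrow> ('c \<Rightarrow> real) \<Rightarrow> bool" where
  "l2w I \<omega> z \<longleftrightarrow> (\<lambda>p. z p * z p * \<omega> p) summable_on I"

definition ipw :: "'c set \<Rightarrow> ('c \<Rightarrow> real) \<Rightarrow> ('c \<Rightarrow> real) \<Rightarrow> ('c \<Rightarrow> real) \<Rightarrow> real" where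
  "ipw I \<omega> a b = infsum (\<lambda>p. a p * b p * \<omega> p) I"

context
  fixes I :: "'c set" and \<omega> :: "'c \<Rightarrow> real"
  assumes \<omega>0: "\<And>p. p \<in> I \<Longrightarrow> 0 \<le> \<omega> p"
begin

lemma l2w_lin:
  assumes "l2w I \<omega> a" "l2w I \<omega> b"
  shows "l2w I \<omega> (\<lambda>p. \<alpha> * a p + \<beta> * b p)"
proof -
  have s: "(\<lambda>p. (2*\<alpha>*\<alpha>) * (a p * a p * \<omega> p) + (2*\<beta>*\<beta>) * (b p * b p * \<omega> p)) summable_on I"
    using assms unfolding l2w_def by (intro summable_on_add summable_on_cmult_right)
  show ?thesis unfolding l2w_def
  proof (rule summable_on_comparison_test[OF s])
    fix p assume p: "p \<in> I"
    have "(\<alpha> * a p + \<beta> * b p) * (\<alpha> * a p + \<beta> * b p) \<le> 2*\<alpha>*\<alpha>*(a p * a p) + 2*\<beta>*\<beta>*(b p * b p)"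
      by (rule sq_bound_r1)
    then have "(\<alpha> * a p + \<beta> * b p) * (\<alpha> * a p + \<beta> * b p) * \<omega> p \<le> (2*\<alpha>*\<alpha>*(a p * a p) + 2*\<beta>*\<beta>*(b p * b p)) * \<omega> p"
      by (rule mult_right_mono) (rule \<omega>0[OF p])
    then show "(\<alpha> * a p + \<beta> * b p) * (\<alpha> * a p + \<beta> * b p) * \<omega> p \<le> (2*\<alpha>*\<alpha>) * (a p * a p * \<omega> p) + (2*\<beta>*\<beta>) * (b p * b p * \<omega> p)"
      by (simp add: algebra_simps)
    show "0 \<le> (\<alpha> * a p + \<beta> * b p) * (\<alpha> * a p + \<beta> * b p) * \<omega> p"
      using \<omega>0[OF p] by simp
  qed
qed

lemma l2w_diff: "l2w I \<omega> a \<Longrightarrow> l2w I \<omega> b \<Longrightarrow> l2w I \<omega> (\<lambda>p. a p - b p)"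
  using l2w_lin[of a b 1 "-1"] by simp

lemma l2w_add: "l2w I \<omega> a \<Longrightarrow> l2w I \<omega> b \<Longrightarrow> l2w I \<omega> (\<lambda>p. a p + b p)"
  using l2w_lin[of a b 1 1] by simp

lemma prod_summable:
  assumes a: "l2w I \<omega> a" and b: "l2w I \<omega> b"
  shows "(\<lambda>p. a p * b p * \<omega> p) summable_on I"
proof -
  have 1: "(\<lambda>p. (a p + b p) * (a p + b p) * \<omega> p) summable_on I" using l2w_add[OF a b] unfolding l2w_def .
  have 2: "(\<lambda>p. (a p - b p) * (a p - b p) * \<omega> p) summable_on I" using l2w_diff[OF a b] unfolding l2w_def .
  have "(\<lambda>p. (1/4) * ((a p + b p) * (a p + b p) * \<omega> p + (-1) * ((a p - b p) * (a p - b p) * \<omega> p))) summable_on I"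
    using 1 2 by (intro summable_on_cmult_right summable_on_add)
  moreover have "(\<lambda>p. (1/4) * ((a p + b p) * (a p + b p) * \<omega> p + (-1) * ((a p - b p) * (a p - b p) * \<omega> p))) = (\<lambda>p. a p * b p * \<omega> p)"
    by (rule ext) (simp add: algebra_simps)
  ultimately show ?thesis by simp
qed

lemma ipw_lin_left:
  assumes a: "l2w I \<omega> a" and b: "l2w I \<omega> b" and c: "l2w I \<omega> c"
  shows "ipw I \<omega> (\<lambda>p. \<alpha> * a p + \<beta> * b p) c = \<alpha> * ipw I \<omega> a c + \<beta> * ipw I \<omega> b c"
proof -
  have eq: "(\<lambda>p. (\<alpha> * a p + \<beta> * b p) * c p * \<omega> p) = (\<lambda>p. \<alpha> * (a p * c p * \<omega> p) + \<beta> * (b p * c p * \<omega> p))"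
    by (rule ext) (simp add: algebra_simps)
  have s1: "(\<lambda>p. \<alpha> * (a p * c p * \<omega> p)) summable_on I" using prod_summable[OF a c] by (rule summable_on_cmult_right)
  have s2: "(\<lambda>p. \<beta> * (b p * c p * \<omega> p)) summable_on I" using prod_summable[OF b c] by (rule summable_on_cmult_right)
  have "ipw I \<omega> (\<lambda>p. \<alpha> * a p + \<beta> * b p) c = infsum (\<lambda>p. \<alpha> * (a p * c p * \<omega> p) + \<beta> * (b p * c p * \<omega> p)) I"
    unfolding ipw_def eq ..
  also have "\<dots> = infsum (\<lambda>p. \<alpha> * (a p * c p * \<omega> p)) I + infsum (\<lambda>p. \<beta> * (b p * c p * \<omega> p)) I"
    by (rule infsum_add[OF s1 s2])
  finally show ?thesis unfolding ipw_def infsum_cmult_right' .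
qed

lemma ipw_sym: "ipw I \<omega> a b = ipw I \<omega> b a"
  unfolding ipw_def by (simp add: mult.commute mult.left_commute)

lemma ipw_diff_left:
  assumes a: "l2w I \<omega> a" and b: "l2w I \<omega> b" and c: "l2w I \<omega> c"
  shows "ipw I \<omega> (\<lambda>p. a p - b p) c = ipw I \<omega> a c - ipw I \<omega> b c"
  using ipw_lin_left[OF a b c, of 1 "-1"] by simp

lemma ipw_nonneg: "0 \<le> ipw I \<omega> z z"
  unfolding ipw_def by (rule infsum_nonneg) (simp add: \<omega>0)

lemma ipw_point:
  assumes "l2w I \<omega> z" "p \<in> I"
  shows "z p * z p * \<omega> p \<le> ipw I \<omega> z z"
proof -
  have "sum (\<lambda>p. z p * z p * \<omega> p) {p} \<le> infsum (\<lambda>p. z p * z p * \<omega> p) I"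
    using assms by (intro finite_sum_le_infsum) (auto simp: l2w_def \<omega>0)
  then show ?thesis unfolding ipw_def by simp
qed

lemma ipw_finsum:
  assumes "l2w I \<omega> z" "finite F" "F \<subseteq> I"
  shows "sum (\<lambda>p. z p * z p * \<omega> p) F \<le> ipw I \<omega> z z"
  unfolding ipw_def using assms by (intro finite_sum_le_infsum) (auto simp: l2w_def \<omega>0)

lemma l2w_boundI:
  assumes "\<And>F. finite F \<Longrightarrow> F \<subseteq> I \<Longrightarrow> sum (\<lambda>p. z p * z p * \<omega> p) F \<le> B"
  shows "l2w I \<omega> z" "ipw I \<omega> z z \<le> B"
proof -
  have "bdd_above (sum (\<lambda>p. z p * z p * \<omega> p) ` {F. F \<subseteq> I \<and> finite F})"
    using assms by (intro bdd_aboveI2[where M=B]) auto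
  then show s: "l2w I \<omega> z" unfolding l2w_def by (intro nonneg_bdd_above_summable_on) (simp_all add: \<omega>0)
  show "ipw I \<omega> z z \<le> B" unfolding ipw_def
    using s assms unfolding l2w_def by (intro infsum_le_finite_sums) auto
qed

lemma expand:
  assumes a: "l2w I \<omega> a" and h: "l2w I \<omega> h"
  shows "ipw I \<omega> (\<lambda>p. a p + l * h p) (\<lambda>p. a p + l * h p)
       = ipw I \<omega> a a + 2 * l * ipw I \<omega> a h + l * l * ipw I \<omega> h h"
proof -
  have eq: "(\<lambda>p. (a p + l * h p) * (a p + l * h p) * \<omega> p)
      = (\<lambda>p. a p * a p * \<omega> p + ((2 * l) * (a p * h p * \<omega> p) + (l * l) * (h p * h p * \<omega> p)))"
    by (rule ext) (simp add: algebra_simps)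
  have sa: "(\<lambda>p. a p * a p * \<omega> p) summable_on I" using a unfolding l2w_def .
  have sh: "(\<lambda>p. h p * h p * \<omega> p) summable_on I" using h unfolding l2w_def .
  have sah: "(\<lambda>p. a p * h p * \<omega> p) summable_on I" by (rule prod_summable[OF a h])
  have s1: "(\<lambda>p. (2 * l) * (a p * h p * \<omega> p)) summable_on I" using sah by (rule summable_on_cmult_right)
  have s2: "(\<lambda>p. (l * l) * (h p * h p * \<omega> p)) summable_on I" using sh by (rule summable_on_cmult_right)
  have sB: "(\<lambda>p. (2 * l) * (a p * h p * \<omega> p) + (l * l) * (h p * h p * \<omega> p)) summable_on I"
    using s1 s2 by (rule summable_on_add)
  have "ipw I \<omega> (\<lambda>p. a p + l * h p) (\<lambda>p. a p + l * h p)
     = infsum (\<lambda>p. a p * a p * \<omega> p + ((2 * l) * (a p * h p * \<omega> p) + (l * l) * (h p * h p * \<omega> p))) I"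
    unfolding ipw_def eq ..
  also have "\<dots> = infsum (\<lambda>p. a p * a p * \<omega> p) I + infsum (\<lambda>p. (2 * l) * (a p * h p * \<omega> p) + (l * l) * (h p * h p * \<omega> p)) I"
    by (rule infsum_add[OF sa sB])
  also have "infsum (\<lambda>p. (2 * l) * (a p * h p * \<omega> p) + (l * l) * (h p * h p * \<omega> p)) I
     = infsum (\<lambda>p. (2 * l) * (a p * h p * \<omega> p)) I + infsum (\<lambda>p. (l * l) * (h p * h p * \<omega> p)) I"
    by (rule infsum_add[OF s1 s2])
  finally show ?thesis unfolding ipw_def infsum_cmult_right' by simp
qed

lemma ipw_scale: "ipw I \<omega> (\<lambda>p. c * a p) (\<lambda>p. c * a p) = c * c * ipw I \<omega> a a"
proof -
  have "(\<lambda>p. (c * a p) * (c * a p) * \<omega> p) = (\<lambda>p. (c * c) * (a p * a p * \<omega> p))"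
    by (rule ext) (simp add: algebra_simps)
  then show ?thesis unfolding ipw_def by (simp add: infsum_cmult_right')
qed

lemma para:
  assumes a: "l2w I \<omega> a" and b: "l2w I \<omega> b"
  shows "ipw I \<omega> (\<lambda>p. a p - b p) (\<lambda>p. a p - b p) + ipw I \<omega> (\<lambda>p. a p + b p) (\<lambda>p. a p + b p)
     = 2 * ipw I \<omega> a a + 2 * ipw I \<omega> b b"
  using expand[OF a b, of "-1"] expand[OF a b, of 1] by simp

end

lemma proj_unique:
  fixes I :: "'c set" and \<omega> :: "'c \<Rightarrow> real"
  assumes \<omega>pos: "\<And>p. p \<in> I \<Longrightarrow> 0 < \<omega> p"
    and Msub: "\<And>y. y \<in> M \<Longrightarrow> l2w I \<omega> y \<and> (\<forall>p. p \<notin> I \<longrightarrow> y p = 0)"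
    and Mlin: "\<And>a b \<alpha> \<beta>. a \<in> M \<Longrightarrow> b \<in> M \<Longrightarrow> (\<lambda>p. \<alpha> * a p + \<beta> * b p) \<in> M"
    and x: "l2w I \<omega> x"
    and y1: "y1 \<in> M" "\<forall>h\<in>M. ipw I \<omega> (\<lambda>p. x p - y1 p) h = 0"
    and y2: "y2 \<in> M" "\<forall>h\<in>M. ipw I \<omega> (\<lambda>p. x p - y2 p) h = 0"
  shows "y1 = y2"
proof -
  have \<omega>0: "\<And>p. p \<in> I \<Longrightarrow> 0 \<le> \<omega> p" using \<omega>pos less_imp_le by metis
  define d where "d = (\<lambda>p. 1 * y1 p + (-1) * y2 p)"
  have dM: "d \<in> M" unfolding d_def using y1(1) y2(1) by (rule Mlin)
  have d': "d = (\<lambda>p. y1 p - y2 p)" unfolding d_def by simp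
  have l1: "l2w I \<omega> y1" and l2: "l2w I \<omega> y2" and ld: "l2w I \<omega> d" using Msub y1(1) y2(1) dM by auto
  have lx1: "l2w I \<omega> (\<lambda>p. x p - y1 p)" using l2w_diff[OF \<omega>0 x l1] by simp
  have lx2: "l2w I \<omega> (\<lambda>p. x p - y2 p)" using l2w_diff[OF \<omega>0 x l2] by simp
  have c1: "ipw I \<omega> (\<lambda>p. x p - y1 p) d = 0" using y1(2) dM by blast
  have c2: "ipw I \<omega> (\<lambda>p. x p - y2 p) d = 0" using y2(2) dM by blast
  have "ipw I \<omega> (\<lambda>p. (x p - y2 p) - (x p - y1 p)) d = ipw I \<omega> (\<lambda>p. x p - y2 p) d - ipw I \<omega> (\<lambda>p. x p - y1 p) d"
    by (rule ipw_diff_left[OF \<omega>0 lx2 lx1 ld])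
  also have "(\<lambda>p. (x p - y2 p) - (x p - y1 p)) = d" unfolding d' by (rule ext) simp
  finally have dd: "ipw I \<omega> d d = 0" using c1 c2 by simp
  show ?thesis
  proof (rule ext)
    fix p
    show "y1 p = y2 p"
    proof (cases "p \<in> I")
      case True
      have "d p * d p * \<omega> p \<le> 0" using ipw_point[OF \<omega>0 ld True] dd by simp
      then have "d p * d p \<le> 0" using mult_le_cancel_right_pos[OF \<omega>pos[OF True], of "d p * d p" 0] by simp
      moreover have "0 \<le> d p * d p" by simp
      ultimately have "d p * d p = 0" by linarith
      then have "d p = 0" by simp
      then show ?thesis unfolding d' by simp
    next
      case False
      have "y1 p = 0" using Msub[OF y1(1)] False by blast
      moreover have "y2 p = 0" using Msub[OF y2(1)] False by blast
      ultimately show ?thesis by simp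
    qed
  qed
qed

lemma proj_exists:
  fixes I :: "'c set" and \<omega> :: "'c \<Rightarrow> real"
  assumes \<omega>pos: "\<And>p. p \<in> I \<Longrightarrow> 0 < \<omega> p"
    and Msub: "\<And>y. y \<in> M \<Longrightarrow> l2w I \<omega> y \<and> (\<forall>p. p \<notin> I \<longrightarrow> y p = 0)"
    and M0: "(\<lambda>p. 0) \<in> M"
    and Mlin: "\<And>a b \<alpha> \<beta>. a \<in> M \<Longrightarrow> b \<in> M \<Longrightarrow> (\<lambda>p. \<alpha> * a p + \<beta> * b p) \<in> M"
    and Mclosed: "\<And>Y z. (\<And>n. Y n \<in> M) \<Longrightarrow> (\<And>p. (\<lambda>n. Y n p) \<longlonglongrightarrow> z p) \<Longrightarrow> l2w I \<omega> z
        \<Longrightarrow> (\<forall>p. p \<notin> I \<longrightarrow> z p = 0) \<Longrightarrow> z \<in> M"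
    and x: "l2w I \<omega> x"
  shows "\<exists>y\<in>M. \<forall>h\<in>M. ipw I \<omega> (\<lambda>p. x p - y p) h = 0"
proof -
  have \<omega>0: "\<And>p. p \<in> I \<Longrightarrow> 0 \<le> \<omega> p" using \<omega>pos less_imp_le by metis
  define N where "N z = ipw I \<omega> z z" for z
  have Nnn: "\<And>z. 0 \<le> N z" unfolding N_def by (rule ipw_nonneg[OF \<omega>0])
  have lM: "\<And>y. y \<in> M \<Longrightarrow> l2w I \<omega> y" using Msub by blast
  have dl2: "\<And>y. y \<in> M \<Longrightarrow> l2w I \<omega> (\<lambda>p. x p - y p)" using l2w_diff[OF \<omega>0 x] lM by blast
  define V where "V = (\<lambda>y. N (\<lambda>p. x p - y p)) ` M"
  define \<delta> where "\<delta> = Inf V"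
  have Vne: "V \<noteq> {}" unfolding V_def using M0 by blast
  have bdd: "bdd_below V" unfolding V_def by (rule bdd_belowI2[where m=0]) (rule Nnn)
  have \<delta>le: "\<And>y. y \<in> M \<Longrightarrow> \<delta> \<le> N (\<lambda>p. x p - y p)"
    unfolding \<delta>_def V_def by (rule cInf_lower) (use bdd V_def in auto)
  have ex: "\<forall>n::nat. \<exists>y. y \<in> M \<and> N (\<lambda>p. x p - y p) < \<delta> + inverse (real (Suc n))"
  proof
    fix n :: nat
    have "Inf V < \<delta> + inverse (real (Suc n))" unfolding \<delta>_def by simp
    then obtain v where "v \<in> V" "v < \<delta> + inverse (real (Suc n))" using cInf_lessD[OF Vne] by blast
    then show "\<exists>y. y \<in> M \<and> N (\<lambda>p. x p - y p) < \<delta> + inverse (real (Suc n))" unfolding V_def by blast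
  qed
  obtain Y where Y: "\<forall>n. Y n \<in> M \<and> N (\<lambda>p. x p - Y n p) < \<delta> + inverse (real (Suc n))"
    using choice[OF ex] by blast
  have YM: "\<And>n. Y n \<in> M" using Y by blast
  have Yb: "\<And>n. N (\<lambda>p. x p - Y n p) < \<delta> + inverse (real (Suc n))" using Y by blast
  have cauchy: "N (\<lambda>p. Y n p - Y m p) \<le> 2 * inverse (real (Suc n)) + 2 * inverse (real (Suc m))" for n m
  proof -
    define a where "a = (\<lambda>p. x p - Y m p)"
    define b where "b = (\<lambda>p. x p - Y n p)"
    have la: "l2w I \<omega> a" unfolding a_def by (rule dl2[OF YM])
    have lb: "l2w I \<omega> b" unfolding b_def by (rule dl2[OF YM])
    define mid where "mid = (\<lambda>p. (1/2) * Y n p + (1/2) * Y m p)"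
    have midM: "mid \<in> M" unfolding mid_def using YM YM by (rule Mlin)
    have 1: "\<delta> \<le> N (\<lambda>p. x p - mid p)" by (rule \<delta>le[OF midM])
    have "(\<lambda>p. a p + b p) = (\<lambda>p. 2 * (x p - mid p))" unfolding a_def b_def mid_def
      by (rule ext) (simp add: algebra_simps)
    then have 2: "N (\<lambda>p. a p + b p) = 4 * N (\<lambda>p. x p - mid p)" unfolding N_def
      using ipw_scale[OF \<omega>0, where c=2 and a="\<lambda>p. x p - mid p"] by simp
    have 3: "(\<lambda>p. a p - b p) = (\<lambda>p. Y n p - Y m p)" unfolding a_def b_def by (rule ext) simp
    have 4: "N (\<lambda>p. a p - b p) + N (\<lambda>p. a p + b p) = 2 * N a + 2 * N b" unfolding N_def
      by (rule para[OF \<omega>0 la lb])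
    have "N a < \<delta> + inverse (real (Suc m))" unfolding a_def by (rule Yb)
    moreover have "N b < \<delta> + inverse (real (Suc n))" unfolding b_def by (rule Yb)
    ultimately show ?thesis using 1 2 3 4 by simp
  qed
  have conv: "convergent (\<lambda>n. Y n p)" for p
  proof (cases "p \<in> I")
    case False
    have "\<And>n. Y n p = 0" using Msub[OF YM] False by blast
    then have "(\<lambda>n. Y n p) = (\<lambda>n. 0)" by (rule ext)
    then show ?thesis by (simp add: convergent_const)
  next
    case True
    have "Cauchy (\<lambda>n. Y n p)"
    proof (rule metric_CauchyI)
      fix e :: real assume e: "0 < e"
      define c where "c = e * e * \<omega> p"
      have c0: "0 < c" unfolding c_def using e \<omega>pos[OF True] by simp
      obtain K :: nat where K: "4 / c < real K" using reals_Archimedean2 by blast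
      have "\<forall>m\<ge>K. \<forall>n\<ge>K. dist (Y m p) (Y n p) < e"
      proof (intro allI impI)
        fix m n assume mK: "K \<le> m" and nK: "K \<le> n"
        have lmn: "l2w I \<omega> (\<lambda>p. Y m p - Y n p)" using l2w_diff[OF \<omega>0 lM[OF YM] lM[OF YM]] .
        have i1: "inverse (real (Suc m)) \<le> inverse (real (Suc K))" using mK by (simp add: field_simps)
        have i2: "inverse (real (Suc n)) \<le> inverse (real (Suc K))" using nK by (simp add: field_simps)
        have "(Y m p - Y n p) * (Y m p - Y n p) * \<omega> p \<le> N (\<lambda>p. Y m p - Y n p)"
          unfolding N_def using ipw_point[OF \<omega>0 lmn True] by simp
        also have "\<dots> \<le> 4 * inverse (real (Suc K))" using cauchy[of m n] i1 i2 by linarith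
        also have "4 * inverse (real (Suc K)) < c"
        proof -
          have "4 / c < real (Suc K)" using K by simp
          then have "4 < real (Suc K) * c" using c0 by (simp add: field_simps)
          then show ?thesis by (simp add: field_simps)
        qed
        finally have "(Y m p - Y n p) * (Y m p - Y n p) * \<omega> p < e * e * \<omega> p" unfolding c_def .
        then have "(Y m p - Y n p) * (Y m p - Y n p) < e * e" using \<omega>pos[OF True] by simp
        then have "\<bar>Y m p - Y n p\<bar> < e" using e by (metis abs_mult_self_eq abs_of_pos mult_strict_mono' not_less abs_ge_zero mult_mono)
        then show "dist (Y m p) (Y n p) < e" by (simp add: dist_real_def)
      qed
      then show "\<exists>M. \<forall>m\<ge>M. \<forall>n\<ge>M. dist (Y m p) (Y n p) < e" by blast
    qed
    then show ?thesis by (simp add: Cauchy_convergent_iff)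
  qed
  define z where "z p = lim (\<lambda>n. Y n p)" for p
  have Yz: "\<And>p. (\<lambda>n. Y n p) \<longlonglongrightarrow> z p" unfolding z_def using conv convergent_LIMSEQ_iff by blast
  have z0: "\<forall>p. p \<notin> I \<longrightarrow> z p = 0"
  proof (intro allI impI)
    fix p assume "p \<notin> I"
    then have "\<And>n. Y n p = 0" using Msub[OF YM] by blast
    then have "(\<lambda>n. Y n p) = (\<lambda>n. 0)" by (rule ext)
    then have "(\<lambda>n. Y n p) \<longlonglongrightarrow> 0" by simp
    then show "z p = 0" using Yz[of p] LIMSEQ_unique by blast
  qed
  have fin: "sum (\<lambda>p. (x p - z p) * (x p - z p) * \<omega> p) F \<le> \<delta>" if F: "finite F" "F \<subseteq> I" for F
  proof -
    have t1: "(\<lambda>n. sum (\<lambda>p. (x p - Y n p) * (x p - Y n p) * \<omega> p) F) \<longlonglongrightarrow> sum (\<lambda>p. (x p - z p) * (x p - z p) * \<omega> p) F"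
      by (intro tendsto_intros Yz)
    have t2: "(\<lambda>n. \<delta> + inverse (real (Suc n))) \<longlonglongrightarrow> \<delta> + 0"
      by (intro tendsto_intros LIMSEQ_inverse_real_of_nat)
    have le: "\<forall>n\<ge>0. sum (\<lambda>p. (x p - Y n p) * (x p - Y n p) * \<omega> p) F \<le> \<delta> + inverse (real (Suc n))"
    proof (intro allI impI)
      fix n :: nat
      have "sum (\<lambda>p. (x p - Y n p) * (x p - Y n p) * \<omega> p) F \<le> N (\<lambda>p. x p - Y n p)"
        unfolding N_def using ipw_finsum[OF \<omega>0 dl2[OF YM] F] by simp
      then show "sum (\<lambda>p. (x p - Y n p) * (x p - Y n p) * \<omega> p) F \<le> \<delta> + inverse (real (Suc n))"
        using Yb[of n] by linarith
    qed
    show ?thesis using LIMSEQ_le[OF t1 t2] le by auto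
  qed
  have lxz: "l2w I \<omega> (\<lambda>p. x p - z p)" and Nxz: "N (\<lambda>p. x p - z p) \<le> \<delta>"
    using l2w_boundI[OF \<omega>0, where z="\<lambda>p. x p - z p" and B=\<delta>] fin unfolding N_def by auto
  have lz: "l2w I \<omega> z"
  proof -
    have "l2w I \<omega> (\<lambda>p. x p - (x p - z p))" by (rule l2w_diff[OF \<omega>0 x lxz])
    then show ?thesis by simp
  qed
  have zM: "z \<in> M" by (rule Mclosed[OF YM Yz lz z0])
  show ?thesis
  proof (intro bexI[of _ z] ballI)
    fix h assume hM: "h \<in> M"
    have lh: "l2w I \<omega> h" by (rule lM[OF hM])
    define c where "c = ipw I \<omega> (\<lambda>p. x p - z p) h"
    have "2 * l * c \<le> l * l * N h" for l
    proof -
      have "(\<lambda>p. 1 * z p + l * h p) \<in> M" using zM hM by (rule Mlin)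
      then have "\<delta> \<le> N (\<lambda>p. x p - (1 * z p + l * h p))" by (rule \<delta>le)
      also have "(\<lambda>p. x p - (1 * z p + l * h p)) = (\<lambda>p. (x p - z p) + (-l) * h p)" by (rule ext) simp
      also have "N (\<lambda>p. (x p - z p) + (-l) * h p) = N (\<lambda>p. x p - z p) + 2 * (-l) * c + (-l) * (-l) * N h"
        unfolding N_def c_def by (rule expand[OF \<omega>0 lxz lh])
      finally show ?thesis using Nxz by simp
    qed
    then show "ipw I \<omega> (\<lambda>p. x p - z p) h = 0" unfolding c_def[symmetric]
      using quad_zero_r2 Nnn by blast
  qed (rule zM)
qed

lemma fto_summable:
  fixes g :: "'x \<Rightarrow> real" and h :: "'y \<Rightarrow> real"
  assumes g0: "\<And>p. p \<in> A \<Longrightarrow> 0 \<le> g p" and gh: "\<And>p. p \<in> A \<Longrightarrow> g p \<le> C * h (\<phi> p)"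
    and \<phi>B: "\<And>p. p \<in> A \<Longrightarrow> \<phi> p \<in> B"
    and fib: "\<And>\<sigma>. \<sigma> \<in> B \<Longrightarrow> finite {p\<in>A. \<phi> p = \<sigma>} \<and> card {p\<in>A. \<phi> p = \<sigma>} \<le> K"
    and hs: "h summable_on B" and h0: "\<And>\<sigma>. \<sigma> \<in> B \<Longrightarrow> 0 \<le> h \<sigma>" and C0: "0 \<le> C"
  shows "g summable_on A"
proof (rule nonneg_bdd_above_summable_on)
  show "\<And>x. x \<in> A \<Longrightarrow> 0 \<le> g x" by (rule g0)
  show "bdd_above (sum g ` {F. F \<subseteq> A \<and> finite F})"
  proof (rule bdd_aboveI2[where M="C * (real K * infsum h B)"])
    fix F assume F: "F \<in> {F. F \<subseteq> A \<and> finite F}"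
    then have FA: "F \<subseteq> A" and fF: "finite F" by auto
    have inner: "sum (\<lambda>p. h (\<phi> p)) F \<le> real K * infsum h B"
    proof -
      have cst: "sum (\<lambda>p. h (\<phi> p)) {p. p \<in> F \<and> \<phi> p = \<sigma>} = real (card {p. p \<in> F \<and> \<phi> p = \<sigma>}) * h \<sigma>" for \<sigma>
      proof -
        have "sum (\<lambda>p. h (\<phi> p)) {p. p \<in> F \<and> \<phi> p = \<sigma>} = sum (\<lambda>p. h \<sigma>) {p. p \<in> F \<and> \<phi> p = \<sigma>}"
          by (rule sum.cong) auto
        then show ?thesis by simp
      qed
      have "sum (\<lambda>p. h (\<phi> p)) F = sum (\<lambda>\<sigma>. sum (\<lambda>p. h (\<phi> p)) {p. p \<in> F \<and> \<phi> p = \<sigma>}) (\<phi> ` F)"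
        by (rule sum.image_gen[OF fF])
      also have "\<dots> = sum (\<lambda>\<sigma>. real (card {p. p \<in> F \<and> \<phi> p = \<sigma>}) * h \<sigma>) (\<phi> ` F)"
        by (simp only: cst)
      also have "\<dots> \<le> sum (\<lambda>\<sigma>. real K * h \<sigma>) (\<phi> ` F)"
      proof (rule sum_mono)
        fix \<sigma> assume \<sigma>: "\<sigma> \<in> \<phi> ` F"
        then have \<sigma>B: "\<sigma> \<in> B" using FA \<phi>B by auto
        have "card {p. p \<in> F \<and> \<phi> p = \<sigma>} \<le> card {p\<in>A. \<phi> p = \<sigma>}"
          using fib[OF \<sigma>B] FA by (intro card_mono) auto
        then have "card {p. p \<in> F \<and> \<phi> p = \<sigma>} \<le> K" using fib[OF \<sigma>B] by linarith
        then have "real (card {p. p \<in> F \<and> \<phi> p = \<sigma>}) \<le> real K" by simp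
        then show "real (card {p. p \<in> F \<and> \<phi> p = \<sigma>}) * h \<sigma> \<le> real K * h \<sigma>"
          using h0[OF \<sigma>B] by (rule mult_right_mono)
      qed
      also have "\<dots> = real K * sum h (\<phi> ` F)" by (simp add: sum_distrib_left)
      also have "sum h (\<phi> ` F) \<le> infsum h B"
        using hs h0 FA \<phi>B fF by (intro finite_sum_le_infsum) auto
      then have "real K * sum h (\<phi> ` F) \<le> real K * infsum h B" by (simp add: mult_left_mono)
      finally show ?thesis .
    qed
    have "sum g F \<le> sum (\<lambda>p. C * h (\<phi> p)) F" using FA gh by (intro sum_mono) auto
    also have "\<dots> = C * sum (\<lambda>p. h (\<phi> p)) F" by (simp add: sum_distrib_left)
    also have "\<dots> \<le> C * (real K * infsum h B)" using inner C0 by (rule mult_left_mono)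
    finally show "sum g F \<le> C * (real K * infsum h B)" .
  qed
qed

lemma pow_bound1:
  assumes t: "0 < (t::real)" and mn: "m \<le> n" and nm: "n \<le> m + k"
  shows "t ^ n \<le> (1 + t ^ k) * t ^ m"
proof (cases "t \<le> 1")
  case True
  have "t ^ n \<le> t ^ m" using True t mn by (intro power_decreasing) auto
  also have "\<dots> \<le> (1 + t ^ k) * t ^ m" using t by (simp add: algebra_simps)
  finally show ?thesis .
next
  case False
  have "t ^ n \<le> t ^ (m + k)" using False nm by (intro power_increasing) auto
  also have "\<dots> = t ^ k * t ^ m" by (simp add: power_add)
  also have "\<dots> \<le> (1 + t ^ k) * t ^ m" using t by (simp add: algebra_simps)
  finally show ?thesis .
qed

lemma pow_bound2:
  assumes t: "0 < (t::real)" and mn: "m \<le> n" and nm: "n \<le> m + k"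
  shows "t ^ m \<le> (1 + inverse (t ^ k)) * t ^ n"
proof (cases "t \<le> 1")
  case True
  have "t ^ (m + k) \<le> t ^ n" using True t nm by (intro power_decreasing) auto
  then have "t ^ k * t ^ m \<le> t ^ n" by (simp add: power_add mult.commute)
  then have "t ^ m \<le> inverse (t ^ k) * t ^ n" using t by (simp add: field_simps)
  also have "\<dots> \<le> (1 + inverse (t ^ k)) * t ^ n" using t by (simp add: algebra_simps)
  finally show ?thesis .
next
  case False
  have "t ^ m \<le> t ^ n" using False mn by (intro power_increasing) auto
  also have "\<dots> \<le> (1 + inverse (t ^ k)) * t ^ n" using t by (simp add: algebra_simps)
  finally show ?thesis .
qed

context racg
begin

abbreviation "chn q \<equiv> chamber_chains P q"
abbreviation "Ix q \<equiv> chamber_chains P q \<times> rac_grp S E"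
definition "wt p = t ^ rac_len S E (snd p)"
definition "cc Ts = poincare S E (hd Ts) t powr (-1/2)"
abbreviation "\<phi> \<equiv> (\<lambda>p. map (rac_coset S E (snd p)) (fst p))"

lemma wt_pos: "0 < wt p" unfolding wt_def using tpos by simp

lemma fin_chn: "finite (chn q)"
proof -
  have "chn q \<subseteq> {Ts. set Ts \<subseteq> P \<and> length Ts = Suc q}" unfolding chamber_chains_def by auto
  then show ?thesis using finite_lists_length_eq[OF finP] by (rule finite_subset)
qed

lemma chn_ne: "Ts \<in> chn q \<Longrightarrow> Ts \<noteq> [] \<and> set Ts \<subseteq> P"
  unfolding chamber_chains_def by auto

lemma cells_iff: "\<sigma> \<in> cells S E P q \<longleftrightarrow> (\<exists>p\<in>Ix q. \<phi> p = \<sigma>)"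
  unfolding cells_def by auto

lemma hecke_ipw: "hecke_ip S E P t q g h = ipw (Ix q) wt g h"
proof -
  have "(\<lambda>(Ts, w). g (Ts, w) * h (Ts, w) * t ^ rac_len S E w) = (\<lambda>p. g p * h p * t ^ rac_len S E (snd p))"
    by (rule ext) (auto split: prod.split)
  then show ?thesis unfolding hecke_ip_def ipw_def wt_def by simp
qed

lemma special_fin: assumes T: "T \<in> P" shows "finite (special S E T)"
proof -
  have "special S E T \<subseteq> rac_cls S E ` D"
  proof
    fix v assume "v \<in> special S E T"
    then obtain ys where ys: "ys \<in> lists T" "v = rac_cls S E ys" unfolding special_def by blast
    obtain zs where zs: "distinct zs" "set zs \<subseteq> T" "rac_eq S E ys zs" using reduce_P[OF T ys(1)] by blast
    have "v = rac_cls S E zs" using ys(2) rac_cls_eqI[OF zs(3)] by simp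
    moreover have "zs \<in> D" using zs P_sub[OF T] by auto
    ultimately show "v \<in> rac_cls S E ` D" by blast
  qed
  then show ?thesis using finite_imageI[OF finD] by (rule finite_subset)
qed

lemma poincare_pos: assumes T: "T \<in> P" shows "0 < poincare S E T t"
proof -
  have "rac_cls S E [] \<in> special S E T" unfolding special_def by auto
  then show ?thesis unfolding poincare_def using special_fin[OF T] tpos
    by (intro sum_pos2[of _ "rac_cls S E []"]) auto
qed

lemma cc_pos: assumes "Ts \<in> chn q" shows "0 < cc Ts"
proof -
  have "hd Ts \<in> P" using chn_ne[OF assms] by (cases Ts) auto
  then have "0 < poincare S E (hd Ts) t" by (rule poincare_pos)
  then show ?thesis unfolding cc_def by simp
qed

lemma embed_eq: "embed S E P t q f p = (if p \<in> Ix q then cc (fst p) * f (\<phi> p) else 0)"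
  unfolding embed_def cc_def by (cases p) auto

lemma deg_bounds:
  assumes p: "p \<in> Ix q"
  shows "cell_deg S E (\<phi> p) \<le> rac_len S E (snd p)" "rac_len S E (snd p) \<le> cell_deg S E (\<phi> p) + card S"
  using deg_bound[of "snd p" "fst p"] p chn_ne[of "fst p" q] by (auto simp: mem_Times_iff)

lemma fiber_fin:
  assumes \<sigma>: "\<sigma> \<in> cells S E P q"
  shows "finite {p \<in> Ix q. \<phi> p = \<sigma>} \<and> card {p \<in> Ix q. \<phi> p = \<sigma>} \<le> card (chn q) * card D"
proof -
  obtain p0 where p0: "p0 \<in> Ix q" "\<phi> p0 = \<sigma>" using \<sigma> cells_iff by blast
  obtain Ts0 w0 where pw: "p0 = (Ts0, w0)" by (cases p0)
  have w0: "w0 \<in> G" and Ts0: "Ts0 \<in> chn q" using p0 pw by auto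
  obtain xs where xs: "xs \<in> w0" using rac_grp_ne[OF w0] by blast
  have T0: "hd Ts0 \<in> P" using chn_ne[OF Ts0] by (cases Ts0) auto
  have sub: "{p \<in> Ix q. \<phi> p = \<sigma>} \<subseteq> chn q \<times> ((\<lambda>zs. rac_cls S E (xs @ zs)) ` D)"
  proof
    fix p assume "p \<in> {p \<in> Ix q. \<phi> p = \<sigma>}"
    then obtain Ts w where p: "p = (Ts, w)" "Ts \<in> chn q" "w \<in> G" "map (rac_coset S E w) Ts = \<sigma>" by auto
    have "Ts \<noteq> []" using chn_ne[OF p(2)] by simp
    then have "rac_coset S E w (hd Ts) = hd \<sigma>" using p(4) by (cases Ts) auto
    also have "hd \<sigma> = rac_coset S E w0 (hd Ts0)" using p0(2) pw chn_ne[OF Ts0] by (cases Ts0) auto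
    finally have eqc: "rac_coset S E w (hd Ts) = rac_coset S E w0 (hd Ts0)" .
    have "w \<in> rac_coset S E w (hd Ts)" by (rule rac_coset_self[OF p(3)])
    then have "w \<in> rac_coset S E w0 (hd Ts0)" unfolding eqc .
    then obtain zs where zs: "distinct zs" "set zs \<subseteq> hd Ts0" "w = rac_cls S E (xs @ zs)"
      using coset_reduce[OF w0 xs T0] by blast
    have "zs \<in> D" using zs P_sub[OF T0] by auto
    then show "p \<in> chn q \<times> ((\<lambda>zs. rac_cls S E (xs @ zs)) ` D)" using p zs by auto
  qed
  have fin: "finite (chn q \<times> ((\<lambda>zs. rac_cls S E (xs @ zs)) ` D))" using fin_chn finD by simp
  have "card {p \<in> Ix q. \<phi> p = \<sigma>} \<le> card (chn q \<times> ((\<lambda>zs. rac_cls S E (xs @ zs)) ` D))"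
    by (rule card_mono[OF fin sub])
  also have "\<dots> = card (chn q) * card ((\<lambda>zs. rac_cls S E (xs @ zs)) ` D)" by (rule card_cartesian_product)
  also have "\<dots> \<le> card (chn q) * card D"
    using card_image_le[OF finD, of "\<lambda>zs. rac_cls S E (xs @ zs)"] by (rule mult_le_mono2)
  finally show ?thesis using finite_subset[OF sub fin] by simp
qed

definition "CC q = (\<Sum>Ts\<in>chn q. cc Ts * cc Ts)"

lemma cc_le: "Ts \<in> chn q \<Longrightarrow> cc Ts * cc Ts \<le> CC q"
  unfolding CC_def using fin_chn by (intro member_le_sum) auto

lemma l2_iff: "f \<in> l2_cochains S E P t q \<longleftrightarrow> (\<forall>\<sigma>. \<sigma> \<notin> cells S E P q \<longrightarrow> f \<sigma> = 0) \<and> l2w (cells S E P q) (\<lambda>\<sigma>. t ^ cell_deg S E \<sigma>) f"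
  unfolding l2_cochains_def l2w_def by (simp add: power2_eq_square)

lemma embed_l2:
  assumes f: "f \<in> l2_cochains S E P t q"
  shows "l2w (Ix q) wt (embed S E P t q f)"
proof -
  let ?h = "\<lambda>\<sigma>. f \<sigma> * f \<sigma> * t ^ cell_deg S E \<sigma>"
  have hs: "?h summable_on cells S E P q" using f unfolding l2_iff l2w_def by blast
  show ?thesis unfolding l2w_def
  proof (rule fto_summable[where \<phi>=\<phi> and B="cells S E P q" and h="?h" and C="CC q * (1 + t ^ card S)" and K="card (chn q) * card D"])
    fix p assume p: "p \<in> Ix q"
    show "0 \<le> embed S E P t q f p * embed S E P t q f p * wt p" using wt_pos[of p] by simp
    show "\<phi> p \<in> cells S E P q" using p cells_iff by blast
    have Ts: "fst p \<in> chn q" using p by (auto simp: mem_Times_iff)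
    have c: "cc (fst p) * cc (fst p) \<le> CC q" by (rule cc_le[OF Ts])
    have w: "wt p \<le> (1 + t ^ card S) * t ^ cell_deg S E (\<phi> p)"
      unfolding wt_def using pow_bound1[OF tpos deg_bounds[OF p]] .
    have "embed S E P t q f p * embed S E P t q f p * wt p = (cc (fst p) * cc (fst p)) * (f (\<phi> p) * f (\<phi> p) * wt p)"
      using p by (simp add: embed_eq)
    also have "\<dots> \<le> CC q * (f (\<phi> p) * f (\<phi> p) * wt p)"
      using c by (rule mult_right_mono) (simp add: less_imp_le[OF wt_pos])
    also have "\<dots> \<le> CC q * (f (\<phi> p) * f (\<phi> p) * ((1 + t ^ card S) * t ^ cell_deg S E (\<phi> p)))"
    proof (rule mult_left_mono)
      show "f (\<phi> p) * f (\<phi> p) * wt p \<le> f (\<phi> p) * f (\<phi> p) * ((1 + t ^ card S) * t ^ cell_deg S E (\<phi> p))"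
        using w by (rule mult_left_mono) simp
      show "0 \<le> CC q" unfolding CC_def by (intro sum_nonneg) simp
    qed
    also have "\<dots> = CC q * (1 + t ^ card S) * ?h (\<phi> p)" by (simp add: algebra_simps)
    finally show "embed S E P t q f p * embed S E P t q f p * wt p \<le> CC q * (1 + t ^ card S) * ?h (\<phi> p)" .
  next
    show "\<And>\<sigma>. \<sigma> \<in> cells S E P q \<Longrightarrow> finite {p \<in> Ix q. \<phi> p = \<sigma>} \<and> card {p \<in> Ix q. \<phi> p = \<sigma>} \<le> card (chn q) * card D"
      by (rule fiber_fin)
    show "?h summable_on cells S E P q" by (rule hs)
    show "\<And>\<sigma>. 0 \<le> ?h \<sigma>" using tpos by simp
    have "0 \<le> CC q" unfolding CC_def by (intro sum_nonneg) simp
    then show "0 \<le> CC q * (1 + t ^ card S)" using tpos by simp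
  qed
qed

end

context racg
begin

abbreviation "Hm q \<equiv> harmonic S E P t q"
abbreviation "Mq q \<equiv> embed S E P t q ` harmonic S E P t q"

lemma cob_lin: "cob (\<lambda>\<sigma>. \<alpha> * f \<sigma> + \<beta> * g \<sigma>) \<sigma> = \<alpha> * cob f \<sigma> + \<beta> * cob g \<sigma>"
proof -
  have "(\<lambda>i. (-1) ^ i * (\<alpha> * f (del_nth i \<sigma>) + \<beta> * g (del_nth i \<sigma>)))
      = (\<lambda>i. \<alpha> * ((-1) ^ i * f (del_nth i \<sigma>)) + \<beta> * ((-1) ^ i * g (del_nth i \<sigma>)))"
    by (rule ext) (simp add: algebra_simps)
  then show ?thesis unfolding cob_def by (simp only: sum.distrib sum_distrib_left[symmetric])
qed

lemma bd_t_lin: "bd_t S E P t q (\<lambda>\<sigma>. \<alpha> * f \<sigma> + \<beta> * g \<sigma>) \<eta> = \<alpha> * bd_t S E P t q f \<eta> + \<beta> * bd_t S E P t q g \<eta>"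
proof -
  have "(\<lambda>(\<sigma>, i). (-1) ^ i * t powr (real (cell_deg S E \<sigma>) - real (cell_deg S E \<eta>)) * (\<alpha> * f \<sigma> + \<beta> * g \<sigma>))
      = (\<lambda>x. \<alpha> * (case x of (\<sigma>, i) \<Rightarrow> (-1) ^ i * t powr (real (cell_deg S E \<sigma>) - real (cell_deg S E \<eta>)) * f \<sigma>)
           + \<beta> * (case x of (\<sigma>, i) \<Rightarrow> (-1) ^ i * t powr (real (cell_deg S E \<sigma>) - real (cell_deg S E \<eta>)) * g \<sigma>))"
    by (rule ext) (auto simp: algebra_simps split: prod.split)
  then show ?thesis unfolding bd_t_def by (simp only: sum.distrib sum_distrib_left[symmetric])
qed

lemma deg_w0: "\<And>\<sigma>. 0 \<le> t ^ cell_deg S E \<sigma>" using tpos by simp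

lemma harmonic_lin:
  assumes f: "f \<in> Hm q" and g: "g \<in> Hm q"
  shows "(\<lambda>\<sigma>. \<alpha> * f \<sigma> + \<beta> * g \<sigma>) \<in> Hm q"
proof -
  have fl: "f \<in> l2_cochains S E P t q" and gl: "g \<in> l2_cochains S E P t q"
    using f g unfolding harmonic_def by auto
  have l2: "(\<lambda>\<sigma>. \<alpha> * f \<sigma> + \<beta> * g \<sigma>) \<in> l2_cochains S E P t q"
    using fl gl l2w_lin[of "cells S E P q" "\<lambda>\<sigma>. t ^ cell_deg S E \<sigma>" f g \<alpha> \<beta>] deg_w0
    unfolding l2_iff by auto
  show ?thesis using f g l2 unfolding harmonic_def by (simp add: cob_lin bd_t_lin)
qed

lemma harmonic_0: "(\<lambda>\<sigma>. 0) \<in> Hm q"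
  unfolding harmonic_def l2_cochains_def by (simp add: cob_def bd_t_def)

lemma embed_lin: "embed S E P t q (\<lambda>\<sigma>. \<alpha> * f \<sigma> + \<beta> * g \<sigma>) = (\<lambda>p. \<alpha> * embed S E P t q f p + \<beta> * embed S E P t q g p)"
  by (rule ext) (simp add: embed_eq algebra_simps)

lemma embed_0: "embed S E P t q (\<lambda>\<sigma>. 0) = (\<lambda>p. 0)"
  by (rule ext) (simp add: embed_eq)

lemma M_sub: "y \<in> Mq q \<Longrightarrow> l2w (Ix q) wt y \<and> (\<forall>p. p \<notin> Ix q \<longrightarrow> y p = 0)"
proof -
  assume "y \<in> Mq q"
  then obtain f where f: "f \<in> Hm q" "y = embed S E P t q f" by blast
  have "f \<in> l2_cochains S E P t q" using f(1) unfolding harmonic_def by auto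
  then show ?thesis using f(2) embed_l2 by (simp add: embed_eq)
qed

lemma M_0: "(\<lambda>p. 0) \<in> Mq q"
  using harmonic_0[of q] embed_0[of q] by (metis image_eqI)

lemma M_lin: "a \<in> Mq q \<Longrightarrow> b \<in> Mq q \<Longrightarrow> (\<lambda>p. \<alpha> * a p + \<beta> * b p) \<in> Mq q"
proof -
  assume "a \<in> Mq q" "b \<in> Mq q"
  then obtain f g where f: "f \<in> Hm q" "a = embed S E P t q f" and g: "g \<in> Hm q" "b = embed S E P t q g" by blast
  have "(\<lambda>p. \<alpha> * a p + \<beta> * b p) = embed S E P t q (\<lambda>\<sigma>. \<alpha> * f \<sigma> + \<beta> * g \<sigma>)"
    unfolding f(2) g(2) embed_lin ..
  moreover have "(\<lambda>\<sigma>. \<alpha> * f \<sigma> + \<beta> * g \<sigma>) \<in> Hm q" by (rule harmonic_lin[OF f(1) g(1)])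
  ultimately show ?thesis by blast
qed

lemma cob_tendsto:
  assumes "\<And>\<sigma>. (\<lambda>n. F n \<sigma>) \<longlonglongrightarrow> f \<sigma>"
  shows "(\<lambda>n. cob (F n) \<sigma>) \<longlonglongrightarrow> cob f \<sigma>"
  unfolding cob_def by (intro tendsto_intros assms)

lemma bd_t_tendsto:
  assumes "\<And>\<sigma>. (\<lambda>n. F n \<sigma>) \<longlonglongrightarrow> f \<sigma>"
  shows "(\<lambda>n. bd_t S E P t q (F n) \<eta>) \<longlonglongrightarrow> bd_t S E P t q f \<eta>"
  unfolding bd_t_def by (rule tendsto_sum, simp only: case_prod_beta, intro tendsto_intros assms)

definition "rep q \<sigma> = (SOME p. p \<in> Ix q \<and> \<phi> p = \<sigma>)"

lemma rep_prop: "\<sigma> \<in> cells S E P q \<Longrightarrow> rep q \<sigma> \<in> Ix q \<and> \<phi> (rep q \<sigma>) = \<sigma>"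
  unfolding rep_def cells_iff by (rule someI_ex) blast

definition "CI q = (\<Sum>Ts\<in>chn q. inverse (cc Ts * cc Ts))"

lemma CI_le: "Ts \<in> chn q \<Longrightarrow> inverse (cc Ts * cc Ts) \<le> CI q"
  unfolding CI_def using fin_chn by (intro member_le_sum) auto

lemma CI_nonneg: "0 \<le> CI q"
  unfolding CI_def by (intro sum_nonneg) simp

lemma M_closed:
  assumes Y: "\<And>n. Y n \<in> Mq q" and Yz: "\<And>p. (\<lambda>n. Y n p) \<longlonglongrightarrow> z p"
    and lz: "l2w (Ix q) wt z" and z0: "\<forall>p. p \<notin> Ix q \<longrightarrow> z p = 0"
  shows "z \<in> Mq q"
proof -
  have "\<forall>n. \<exists>f. f \<in> Hm q \<and> Y n = embed S E P t q f" using Y by blast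
  then obtain F where F: "\<And>n. F n \<in> Hm q" "\<And>n. Y n = embed S E P t q (F n)" by (metis)
  have Fl: "\<And>n. F n \<in> l2_cochains S E P t q" using F(1) unfolding harmonic_def by blast
  have F0: "\<And>n \<sigma>. \<sigma> \<notin> cells S E P q \<Longrightarrow> F n \<sigma> = 0" using Fl unfolding l2_cochains_def by blast
  define f where "f \<sigma> = (if \<sigma> \<in> cells S E P q then z (rep q \<sigma>) / cc (fst (rep q \<sigma>)) else 0)" for \<sigma>
  have Fconv: "(\<lambda>n. F n \<sigma>) \<longlonglongrightarrow> f \<sigma>" for \<sigma>
  proof (cases "\<sigma> \<in> cells S E P q")
    case True
    have rp: "rep q \<sigma> \<in> Ix q" "\<phi> (rep q \<sigma>) = \<sigma>" using rep_prop[OF True] by auto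
    have ccp: "0 < cc (fst (rep q \<sigma>))" using rp(1) cc_pos by (auto simp: mem_Times_iff)
    have "\<And>n. F n \<sigma> = Y n (rep q \<sigma>) / cc (fst (rep q \<sigma>))"
      using rp ccp by (simp add: F(2) embed_eq)
    then have "(\<lambda>n. F n \<sigma>) = (\<lambda>n. Y n (rep q \<sigma>) / cc (fst (rep q \<sigma>)))" by (rule ext)
    moreover have "(\<lambda>n. Y n (rep q \<sigma>) / cc (fst (rep q \<sigma>))) \<longlonglongrightarrow> z (rep q \<sigma>) / cc (fst (rep q \<sigma>))"
      by (intro tendsto_divide Yz tendsto_const) (use ccp in simp)
    ultimately show ?thesis using True by (simp add: f_def)
  next
    case False
    then have "(\<lambda>n. F n \<sigma>) = (\<lambda>n. 0)" using F0 by (intro ext) blast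
    then show ?thesis using False by (simp add: f_def)
  qed
  have zf: "z p = cc (fst p) * f (\<phi> p)" if p: "p \<in> Ix q" for p
  proof -
    have "\<And>n. Y n p = cc (fst p) * F n (\<phi> p)" using p by (simp add: F(2) embed_eq)
    then have "(\<lambda>n. Y n p) = (\<lambda>n. cc (fst p) * F n (\<phi> p))" by (rule ext)
    moreover have "(\<lambda>n. cc (fst p) * F n (\<phi> p)) \<longlonglongrightarrow> cc (fst p) * f (\<phi> p)" by (intro tendsto_intros Fconv)
    ultimately have "(\<lambda>n. Y n p) \<longlonglongrightarrow> cc (fst p) * f (\<phi> p)" by simp
    then show ?thesis using Yz[of p] LIMSEQ_unique by blast
  qed
  have emb: "embed S E P t q f = z"
  proof (rule ext)
    fix p show "embed S E P t q f p = z p"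
    proof (cases "p \<in> Ix q")
      case True then show ?thesis using zf[OF True] by (simp add: embed_eq)
    next
      case False
      have "z p = 0" using z0 False by blast
      then show ?thesis using False by (simp add: embed_eq)
    qed
  qed
  have fl2: "f \<in> l2_cochains S E P t q"
    unfolding l2_iff
  proof
    show "\<forall>\<sigma>. \<sigma> \<notin> cells S E P q \<longrightarrow> f \<sigma> = 0" by (simp add: f_def)
    show "l2w (cells S E P q) (\<lambda>\<sigma>. t ^ cell_deg S E \<sigma>) f"
      unfolding l2w_def
    proof (rule fto_summable[where \<phi>="rep q" and B="Ix q" and h="\<lambda>p. z p * z p * wt p"
          and C="CI q * (1 + inverse (t ^ card S))" and K=1])
      fix \<sigma> assume \<sigma>: "\<sigma> \<in> cells S E P q"
      have rp: "rep q \<sigma> \<in> Ix q" "\<phi> (rep q \<sigma>) = \<sigma>" using rep_prop[OF \<sigma>] by auto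
      let ?p = "rep q \<sigma>"
      show "0 \<le> f \<sigma> * f \<sigma> * t ^ cell_deg S E \<sigma>" using tpos by simp
      show "rep q \<sigma> \<in> Ix q" by (rule rp(1))
      have Ts: "fst ?p \<in> chn q" using rp(1) by (auto simp: mem_Times_iff)
      have ccp: "0 < cc (fst ?p)" by (rule cc_pos[OF Ts])
      have fs: "f \<sigma> = z ?p / cc (fst ?p)" using \<sigma> by (simp add: f_def)
      have db: "t ^ cell_deg S E \<sigma> \<le> (1 + inverse (t ^ card S)) * wt ?p"
        unfolding wt_def using pow_bound2[OF tpos deg_bounds[OF rp(1)]] rp(2) by simp
      have "f \<sigma> * f \<sigma> * t ^ cell_deg S E \<sigma> = inverse (cc (fst ?p) * cc (fst ?p)) * (z ?p * z ?p) * t ^ cell_deg S E \<sigma>"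
        using ccp by (simp add: fs field_simps)
      also have "\<dots> \<le> CI q * (z ?p * z ?p) * t ^ cell_deg S E \<sigma>"
        using CI_le[OF Ts] tpos by (intro mult_right_mono) auto
      also have "\<dots> \<le> CI q * (z ?p * z ?p) * ((1 + inverse (t ^ card S)) * wt ?p)"
        using db CI_nonneg by (intro mult_left_mono) auto
      also have "\<dots> = CI q * (1 + inverse (t ^ card S)) * (z ?p * z ?p * wt ?p)" by (simp add: algebra_simps)
      finally show "f \<sigma> * f \<sigma> * t ^ cell_deg S E \<sigma> \<le> CI q * (1 + inverse (t ^ card S)) * (z ?p * z ?p * wt ?p)" .
    next
      fix p assume p: "p \<in> Ix q"
      have sub: "{\<sigma> \<in> cells S E P q. rep q \<sigma> = p} \<subseteq> {\<phi> p}"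
        using rep_prop by auto
      have "card {\<sigma> \<in> cells S E P q. rep q \<sigma> = p} \<le> card {\<phi> p}" by (rule card_mono[OF _ sub]) simp
      then show "finite {\<sigma> \<in> cells S E P q. rep q \<sigma> = p} \<and> card {\<sigma> \<in> cells S E P q. rep q \<sigma> = p} \<le> 1"
        using finite_subset[OF sub] by simp
    next
      show "(\<lambda>p. z p * z p * wt p) summable_on Ix q" using lz unfolding l2w_def .
      show "\<And>p. 0 \<le> z p * z p * wt p"
      proof -
        fix p :: "'a set list \<times> 'a list set"
        have "0 \<le> wt p" using wt_pos[of p] by simp
        moreover have "0 \<le> z p * z p" by simp
        ultimately show "0 \<le> z p * z p * wt p" by simp
      qed
      show "0 \<le> CI q * (1 + inverse (t ^ card S))" using CI_nonneg tpos by simp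
    qed
  qed
  have fh: "f \<in> Hm q"
    unfolding harmonic_def
  proof (intro CollectI conjI ballI impI)
    show "f \<in> l2_cochains S E P t q" by (rule fl2)
    fix \<sigma> assume \<sigma>: "\<sigma> \<in> cells S E P (Suc q)"
    have "cob (F n) \<sigma> = 0" for n using F(1)[of n] \<sigma> unfolding harmonic_def by simp
    then have e: "(\<lambda>n. cob (F n) \<sigma>) = (\<lambda>n. 0)" by (intro ext)
    have "(\<lambda>n. cob (F n) \<sigma>) \<longlonglongrightarrow> cob f \<sigma>" by (rule cob_tendsto[OF Fconv])
    then have "(\<lambda>n. 0) \<longlonglongrightarrow> cob f \<sigma>" unfolding e .
    then show "cob f \<sigma> = 0" using LIMSEQ_unique[OF tendsto_const[of 0]] by simp
  next
    fix \<eta> assume q0: "0 < q" and \<eta>: "\<eta> \<in> cells S E P (q - 1)"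
    have "bd_t S E P t q (F n) \<eta> = 0" for n using F(1)[of n] q0 \<eta> unfolding harmonic_def by simp
    then have e: "(\<lambda>n. bd_t S E P t q (F n) \<eta>) = (\<lambda>n. 0)" by (intro ext)
    have "(\<lambda>n. bd_t S E P t q (F n) \<eta>) \<longlonglongrightarrow> bd_t S E P t q f \<eta>" by (rule bd_t_tendsto[OF Fconv])
    then have "(\<lambda>n. 0) \<longlonglongrightarrow> bd_t S E P t q f \<eta>" unfolding e .
    then show "bd_t S E P t q f \<eta> = 0" using LIMSEQ_unique[OF tendsto_const[of 0]] by simp
  qed
  show ?thesis using fh emb by blast
qed

lemma delta_l2: "l2w (Ix q) wt (delta_one S E Ts0)"
proof -
  let ?p0 = "(Ts0, rac_one S E)"
  let ?g = "\<lambda>p. delta_one S E Ts0 p * delta_one S E Ts0 p * wt p"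
  have "?g summable_on (Ix q \<inter> {?p0})" by (rule summable_on_finite) simp
  moreover have "?g summable_on Ix q \<longleftrightarrow> ?g summable_on (Ix q \<inter> {?p0})"
    by (rule summable_on_cong_neutral) (auto simp: delta_one_def split: prod.split)
  ultimately show ?thesis unfolding l2w_def by simp
qed

lemma sol_ex: "\<exists>y\<in>Mq q. \<forall>h\<in>Mq q. hecke_ip S E P t q (\<lambda>p. x p - y p) h = 0"
  if "l2w (Ix q) wt x"
  unfolding hecke_ipw
  by (rule proj_exists[OF wt_pos M_sub M_0 M_lin M_closed that])

lemma orth_proj_eq:
  assumes x: "l2w (Ix q) wt x"
    and y: "y \<in> Mq q" "\<forall>h\<in>Mq q. hecke_ip S E P t q (\<lambda>p. x p - y p) h = 0"
  shows "orth_proj (hecke_ip S E P t q) (Mq q) x = y"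
  unfolding orth_proj_def
proof (rule the_equality)
  show "y \<in> Mq q \<and> (\<forall>h\<in>Mq q. hecke_ip S E P t q (\<lambda>p. x p - y p) h = 0)" using y by blast
  fix y' assume y': "y' \<in> Mq q \<and> (\<forall>h\<in>Mq q. hecke_ip S E P t q (\<lambda>p. x p - y' p) h = 0)"
  show "y' = y"
  proof (rule proj_unique[OF wt_pos M_sub M_lin x])
    show "y' \<in> Mq q" "y \<in> Mq q" using y y' by auto
    show "\<forall>h\<in>Mq q. ipw (Ix q) wt (\<lambda>p. x p - y' p) h = 0" using y' unfolding hecke_ipw by blast
    show "\<forall>h\<in>Mq q. ipw (Ix q) wt (\<lambda>p. x p - y p) h = 0" using y unfolding hecke_ipw by blast
  qed
qed

end

lemma rtranclp_map_gen2:
  assumes "\<And>x y. r x y \<Longrightarrow> r'\<^sup>*\<^sup>* (f x) (f y)" "r\<^sup>*\<^sup>* x y"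
  shows "r'\<^sup>*\<^sup>* (f x) (f y)"
  using assms(2)
proof (induction rule: rtranclp_induct)
  case base then show ?case by simp
next
  case (step y z) then show ?case using assms(1)[of y z] by (meson rtranclp_trans)
qed

lemma rac_step_mono: "rac_step K E xs ys \<Longrightarrow> K \<subseteq> S \<Longrightarrow> rac_step S E xs ys"
  unfolding rac_step_def by blast

lemma rac_eq_mono:
  assumes r: "rac_eq K E xs ys" and KS: "K \<subseteq> S"
  shows "rac_eq S E xs ys"
proof -
  have st: "(\<lambda>x y. rac_step K E x y \<or> rac_step K E y x)\<^sup>*\<^sup>* xs ys" using r unfolding rac_eq_def by blast
  have "(\<lambda>x y. rac_step S E x y \<or> rac_step S E y x)\<^sup>*\<^sup>* (id xs) (id ys)"
  proof (rule rtranclp_map_gen[OF _ st])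
    fix x y assume "rac_step K E x y \<or> rac_step K E y x"
    then show "rac_step S E (id x) (id y) \<or> rac_step S E (id y) (id x)" using rac_step_mono[OF _ KS] by auto
  qed
  then show ?thesis using r KS unfolding rac_eq_def by auto
qed

lemma rac_step_filter:
  assumes "rac_step S E xs ys"
  shows "filter (\<lambda>x. x \<in> K) xs = filter (\<lambda>x. x \<in> K) ys \<or> rac_step K E (filter (\<lambda>x. x \<in> K) xs) (filter (\<lambda>x. x \<in> K) ys)"
  using assms[unfolded rac_step_def]
proof (elim disjE exE conjE)
  fix a b s assume h: "s \<in> S" "xs = a @ [s, s] @ b" "ys = a @ b"
  show ?thesis
  proof (cases "s \<in> K")
    case True
    have "\<exists>a' b' s'. s' \<in> K \<and> filter (\<lambda>x. x \<in> K) xs = a' @ [s', s'] @ b' \<and> filter (\<lambda>x. x \<in> K) ys = a' @ b'"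
      using True h by (intro exI[of _ "filter (\<lambda>x. x \<in> K) a"] exI[of _ "filter (\<lambda>x. x \<in> K) b"] exI[of _ s]) simp
    then show ?thesis unfolding rac_step_def by blast
  next
    case False then show ?thesis using h by simp
  qed
next
  fix a b s u assume h: "s \<in> S" "u \<in> S" "E s u" "xs = a @ [s, u] @ b" "ys = a @ [u, s] @ b"
  show ?thesis
  proof (cases "s \<in> K \<and> u \<in> K")
    case True
    have "\<exists>a' b' s' u'. s' \<in> K \<and> u' \<in> K \<and> E s' u' \<and> filter (\<lambda>x. x \<in> K) xs = a' @ [s', u'] @ b' \<and> filter (\<lambda>x. x \<in> K) ys = a' @ [u', s'] @ b'"
      using True h by (intro exI[of _ "filter (\<lambda>x. x \<in> K) a"] exI[of _ "filter (\<lambda>x. x \<in> K) b"] exI[of _ s] exI[of _ u]) simp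
    then show ?thesis unfolding rac_step_def by blast
  next
    case False then show ?thesis using h by auto
  qed
qed

lemma rac_eq_filter:
  assumes r: "rac_eq S E xs ys"
  shows "rac_eq K E (filter (\<lambda>x. x \<in> K) xs) (filter (\<lambda>x. x \<in> K) ys)"
proof -
  let ?f = "filter (\<lambda>x. x \<in> K)"
  have st: "(\<lambda>x y. rac_step S E x y \<or> rac_step S E y x)\<^sup>*\<^sup>* xs ys" using r unfolding rac_eq_def by blast
  have "(\<lambda>x y. rac_step K E x y \<or> rac_step K E y x)\<^sup>*\<^sup>* (?f xs) (?f ys)"
  proof (rule rtranclp_map_gen2[OF _ st])
    fix x y assume "rac_step S E x y \<or> rac_step S E y x"
    then show "(\<lambda>x y. rac_step K E x y \<or> rac_step K E y x)\<^sup>*\<^sup>* (?f x) (?f y)"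
    proof
      assume "rac_step S E x y"
      then have "?f x = ?f y \<or> rac_step K E (?f x) (?f y)" by (rule rac_step_filter)
      then show ?thesis by auto
    next
      assume "rac_step S E y x"
      then have "?f y = ?f x \<or> rac_step K E (?f y) (?f x)" by (rule rac_step_filter)
      then show ?thesis by auto
    qed
  qed
  moreover have "?f xs \<in> lists K" "?f ys \<in> lists K" by auto
  ultimately show ?thesis unfolding rac_eq_def by blast
qed

lemma filter_lists: "xs \<in> lists K \<Longrightarrow> filter (\<lambda>x. x \<in> K) xs = xs"
  by (induction xs) auto

locale rtrans = L: racg S E P t + K: racg K' E P t for S E P t K' +
  assumes KS: "K' \<subseteq> S" and PK: "\<And>T. T \<in> P \<Longrightarrow> T \<subseteq> K'"
begin

definition "\<iota> h = rac_cls S E (SOME xs. xs \<in> h)"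

lemma eqK_iff: "xs \<in> lists K' \<Longrightarrow> ys \<in> lists K' \<Longrightarrow> rac_eq S E xs ys \<longleftrightarrow> rac_eq K' E xs ys"
proof
  assume "xs \<in> lists K'" "ys \<in> lists K'" "rac_eq S E xs ys"
  then show "rac_eq K' E xs ys" using rac_eq_filter[of S E xs ys K'] by (simp add: filter_lists)
next
  assume "rac_eq K' E xs ys" then show "rac_eq S E xs ys" using rac_eq_mono KS by blast
qed

lemma iota_cls: assumes xs: "xs \<in> lists K'" shows "\<iota> (rac_cls K' E xs) = rac_cls S E xs"
proof -
  have ex: "\<exists>ys. ys \<in> rac_cls K' E xs" using rac_cls_self[OF xs] by blast
  define ys where "ys = (SOME ys. ys \<in> rac_cls K' E xs)"
  have "ys \<in> rac_cls K' E xs" unfolding ys_def using ex by (rule someI_ex)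
  then have "rac_eq K' E xs ys" by (simp add: mem_rac_cls)
  then have "rac_eq S E xs ys" using rac_eq_mono KS by blast
  then have "rac_cls S E xs = rac_cls S E ys" by (rule rac_cls_eqI)
  then have "rac_cls S E ys = rac_cls S E xs" by simp
  then show ?thesis unfolding \<iota>_def ys_def by simp
qed

lemma GK_cls: "h \<in> rac_grp K' E \<Longrightarrow> \<exists>xs \<in> lists K'. h = rac_cls K' E xs"
  unfolding rac_grp_def by blast

lemma iota_G: "h \<in> rac_grp K' E \<Longrightarrow> \<iota> h \<in> rac_grp S E"
proof -
  assume "h \<in> rac_grp K' E"
  then obtain xs where xs: "xs \<in> lists K'" "h = rac_cls K' E xs" using GK_cls by blast
  have "xs \<in> lists S" using xs(1) KS by auto
  then show ?thesis using iota_cls[OF xs(1)] xs(2) rac_cls_in_grp by simp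
qed

lemma iota_inj: "inj_on \<iota> (rac_grp K' E)"
proof (rule inj_onI)
  fix h1 h2 assume h1: "h1 \<in> rac_grp K' E" and h2: "h2 \<in> rac_grp K' E" and eq: "\<iota> h1 = \<iota> h2"
  obtain xs where xs: "xs \<in> lists K'" "h1 = rac_cls K' E xs" using GK_cls[OF h1] by blast
  obtain ys where ys: "ys \<in> lists K'" "h2 = rac_cls K' E ys" using GK_cls[OF h2] by blast
  have "rac_cls S E xs = \<iota> h1" using iota_cls[OF xs(1)] xs(2) by simp
  also have "\<dots> = \<iota> h2" by (rule eq)
  also have "\<dots> = rac_cls S E ys" using iota_cls[OF ys(1)] ys(2) by simp
  finally have c: "rac_cls S E xs = rac_cls S E ys" .
  have "xs \<in> lists S" using xs(1) KS by auto
  then have "rac_eq S E xs ys" using c rac_cls_eq_iff[of xs S E ys] by simp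
  then have "rac_eq K' E xs ys" using eqK_iff[OF xs(1) ys(1)] by simp
  then have "rac_cls K' E xs = rac_cls K' E ys" by (rule rac_cls_eqI)
  then show "h1 = h2" using xs(2) ys(2) by simp
qed

lemma iota_len: assumes h: "h \<in> rac_grp K' E" shows "rac_len S E (\<iota> h) = rac_len K' E h"
proof -
  obtain xs where xs: "xs \<in> lists K'" "h = rac_cls K' E xs" using GK_cls[OF h] by blast
  have ih: "\<iota> h = rac_cls S E xs" using xs iota_cls by simp
  obtain x0 where x0: "x0 \<in> h" "length x0 = rac_len K' E h" using rac_len_ex[OF h] by blast
  have "rac_eq K' E xs x0" using x0(1) xs(2) by (simp add: mem_rac_cls)
  then have "rac_eq S E xs x0" using rac_eq_mono KS by blast
  then have "x0 \<in> \<iota> h" unfolding ih by (simp add: mem_rac_cls)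
  then have "rac_len S E (\<iota> h) \<le> length x0" by (rule rac_len_le)
  then have le1: "rac_len S E (\<iota> h) \<le> rac_len K' E h" using x0(2) by simp
  obtain x1 where x1: "x1 \<in> \<iota> h" "length x1 = rac_len S E (\<iota> h)" using rac_len_ex[OF iota_G[OF h]] by blast
  have "rac_eq S E xs x1" using x1(1) ih by (simp add: mem_rac_cls)
  then have "rac_eq K' E (filter (\<lambda>x. x \<in> K') xs) (filter (\<lambda>x. x \<in> K') x1)" by (rule rac_eq_filter)
  then have "rac_eq K' E xs (filter (\<lambda>x. x \<in> K') x1)" using xs(1) by (simp add: filter_lists)
  then have "filter (\<lambda>x. x \<in> K') x1 \<in> h" using xs(2) by (simp add: mem_rac_cls)
  then have "rac_len K' E h \<le> length (filter (\<lambda>x. x \<in> K') x1)" by (rule rac_len_le)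
  also have "\<dots> \<le> length x1" by simp
  finally show ?thesis using le1 x1(2) by simp
qed

lemma iota_one: "\<iota> (rac_one K' E) = rac_one S E"
  unfolding rac_one_def using iota_cls[of "[]"] by simp

lemma one_K: "rac_one K' E \<in> rac_grp K' E"
  unfolding rac_one_def rac_grp_def by auto

lemma iota_coset:
  assumes h: "h \<in> rac_grp K' E" and T: "T \<in> P"
  shows "rac_coset S E (\<iota> h) T = \<iota> ` rac_coset K' E h T"
proof -
  obtain xs where xs: "xs \<in> lists K'" "h = rac_cls K' E xs" using GK_cls[OF h] by blast
  have xsh: "xs \<in> h" using rac_cls_self[OF xs(1)] xs(2) by simp
  have xsS: "xs \<in> lists S" using xs(1) KS by auto
  have xsi: "xs \<in> \<iota> h" using iota_cls[OF xs(1)] xs(2) rac_cls_self[OF xsS] by simp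
  have TK: "T \<subseteq> K'" by (rule PK[OF T])
  have TS: "T \<subseteq> S" using TK KS by blast
  have "rac_coset S E (\<iota> h) T = {rac_cls S E (xs @ ys) | ys. ys \<in> lists T}"
    by (rule rac_coset_eq[OF iota_G[OF h] xsi TS])
  also have "\<dots> = \<iota> ` {rac_cls K' E (xs @ ys) | ys. ys \<in> lists T}"
  proof -
    have "\<And>ys. ys \<in> lists T \<Longrightarrow> \<iota> (rac_cls K' E (xs @ ys)) = rac_cls S E (xs @ ys)"
      using xs(1) TK by (intro iota_cls) auto
    then show ?thesis by (auto simp: image_iff)
  qed
  also have "{rac_cls K' E (xs @ ys) | ys. ys \<in> lists T} = rac_coset K' E h T"
    by (rule rac_coset_eq[OF h xsh TK, symmetric])
  finally show ?thesis .
qed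

end

lemma sorted_wrt_del_nth:
  assumes s: "sorted_wrt R xs" shows "sorted_wrt R (del_nth i xs)"
proof -
  have s2: "sorted_wrt R (take i xs @ drop i xs)" using s by simp
  then have a: "sorted_wrt R (take i xs)" "\<forall>x\<in>set (take i xs). \<forall>y\<in>set (drop i xs). R x y"
    unfolding sorted_wrt_append by auto
  have b: "sorted_wrt R (drop (Suc i) xs)" using s by simp
  have "set (drop (Suc i) xs) \<subseteq> set (drop i xs)" by (rule set_drop_subset_set_drop) simp
  then show ?thesis unfolding del_nth_def sorted_wrt_append using a b by blast
qed

lemma del_nth_map: "del_nth i (map f xs) = map f (del_nth i xs)"
  unfolding del_nth_def by (simp add: take_map drop_map)

lemma length_del_nth: "i < length xs \<Longrightarrow> length (del_nth i xs) = length xs - 1"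
  unfolding del_nth_def by simp

lemma set_del_nth: "set (del_nth i xs) \<subseteq> set xs"
  unfolding del_nth_def using set_take_subset set_drop_subset by fastforce

lemma chains_del:
  assumes "Ts \<in> chamber_chains P (Suc q)" "i < length Ts"
  shows "del_nth i Ts \<in> chamber_chains P q"
  using assms sorted_wrt_del_nth set_del_nth[of i Ts] length_del_nth[of i Ts]
  unfolding chamber_chains_def by auto

lemma cells_face:
  assumes "\<sigma> \<in> cells S E P (Suc q)" "i < length \<sigma>"
  shows "del_nth i \<sigma> \<in> cells S E P q"
proof -
  obtain w Ts where w: "\<sigma> = map (rac_coset S E w) Ts" "w \<in> rac_grp S E" "Ts \<in> chamber_chains P (Suc q)"
    using assms(1) unfolding cells_def by blast
  have "del_nth i Ts \<in> chamber_chains P q" using chains_del[OF w(3)] assms(2) w(1) by simp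
  then show ?thesis unfolding cells_def w(1) del_nth_map using w(2) by blast
qed

context rtrans
begin

definition "\<iota>c \<sigma> = map (\<lambda>C. \<iota> ` C) \<sigma>"
abbreviation "GK \<equiv> rac_grp K' E"
abbreviation "GL \<equiv> rac_grp S E"

lemma iota_cell:
  assumes h: "h \<in> GK" and Ts: "set Ts \<subseteq> P"
  shows "\<iota>c (map (rac_coset K' E h) Ts) = map (rac_coset S E (\<iota> h)) Ts"
  unfolding \<iota>c_def using iota_coset[OF h] Ts by auto

lemma cellsK_L: assumes "\<sigma> \<in> cells K' E P q" shows "\<iota>c \<sigma> \<in> cells S E P q"
proof -
  obtain h Ts where h: "\<sigma> = map (rac_coset K' E h) Ts" "h \<in> GK" "Ts \<in> chamber_chains P q"
    using assms unfolding cells_def by blast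
  have "set Ts \<subseteq> P" using h(3) unfolding chamber_chains_def by blast
  then have "\<iota>c \<sigma> = map (rac_coset S E (\<iota> h)) Ts" using iota_cell[OF h(2)] h(1) by simp
  then show ?thesis unfolding cells_def using iota_G[OF h(2)] h(3) by blast
qed

lemma cellsK_sub: assumes "\<sigma> \<in> cells K' E P q" "C \<in> set \<sigma>" shows "C \<subseteq> GK"
proof -
  obtain h Ts where h: "\<sigma> = map (rac_coset K' E h) Ts" "h \<in> GK" "Ts \<in> chamber_chains P q"
    using assms unfolding cells_def by blast
  obtain T where T: "T \<in> set Ts" "C = rac_coset K' E h T" using assms(2) h(1) by auto
  have "T \<in> P" using T(1) h(3) unfolding chamber_chains_def by blast
  then show ?thesis using T(2) rac_coset_sub[OF h(2) PK] by blast
qed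

lemma iotac_inj:
  assumes "\<sigma>1 \<in> cells K' E P q1" "\<sigma>2 \<in> cells K' E P q2" "\<iota>c \<sigma>1 = \<iota>c \<sigma>2"
  shows "\<sigma>1 = \<sigma>2"
proof (rule map_inj_on)
  show "map (image \<iota>) \<sigma>1 = map (image \<iota>) \<sigma>2" using assms(3) unfolding \<iota>c_def by simp
  have "set \<sigma>1 \<union> set \<sigma>2 \<subseteq> Pow GK" using cellsK_sub assms(1,2) by blast
  then show "inj_on (image \<iota>) (set \<sigma>1 \<union> set \<sigma>2)" using inj_on_image_Pow[OF iota_inj] inj_on_subset by blast
qed

lemma inB:
  assumes w: "w \<in> GL" and Ts: "Ts \<noteq> []" "set Ts \<subseteq> P"
    and eq: "map (rac_coset S E w) Ts = \<iota>c \<tau>" and \<tau>: "\<tau> \<in> cells K' E P q"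
  shows "w \<in> \<iota> ` GK"
proof -
  have "rac_coset S E w (hd Ts) \<in> set (map (rac_coset S E w) Ts)" using Ts by (cases Ts) auto
  then have "rac_coset S E w (hd Ts) \<in> set (\<iota>c \<tau>)" unfolding eq .
  then obtain C where C: "C \<in> set \<tau>" "rac_coset S E w (hd Ts) = \<iota> ` C" unfolding \<iota>c_def by auto
  have "w \<in> rac_coset S E w (hd Ts)" by (rule rac_coset_self[OF w])
  then have "w \<in> \<iota> ` C" using C(2) by simp
  then show ?thesis using cellsK_sub[OF \<tau> C(1)] by blast
qed

lemma block_char:
  assumes w: "w \<in> GL" and Ts: "Ts \<in> chamber_chains P q"
  shows "map (rac_coset S E w) Ts \<in> \<iota>c ` cells K' E P q \<longleftrightarrow> w \<in> \<iota> ` GK"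
proof
  have Ts': "Ts \<noteq> []" "set Ts \<subseteq> P" using Ts unfolding chamber_chains_def by auto
  assume "map (rac_coset S E w) Ts \<in> \<iota>c ` cells K' E P q"
  then obtain \<tau> where "\<tau> \<in> cells K' E P q" "map (rac_coset S E w) Ts = \<iota>c \<tau>" by blast
  then show "w \<in> \<iota> ` GK" using inB[OF w Ts'] by blast
next
  have Ts': "set Ts \<subseteq> P" using Ts unfolding chamber_chains_def by auto
  assume "w \<in> \<iota> ` GK"
  then obtain h where h: "h \<in> GK" "w = \<iota> h" by blast
  have "map (rac_coset S E w) Ts = \<iota>c (map (rac_coset K' E h) Ts)" using iota_cell[OF h(1) Ts'] h(2) by simp
  moreover have "map (rac_coset K' E h) Ts \<in> cells K' E P q" unfolding cells_def using h(1) Ts by blast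
  ultimately show "map (rac_coset S E w) Ts \<in> \<iota>c ` cells K' E P q" by blast
qed

lemma coface:
  assumes \<sigma>: "\<sigma> \<in> cells S E P (Suc q)" and i: "i < length \<sigma>" and d: "del_nth i \<sigma> \<in> \<iota>c ` cells K' E P q"
  shows "\<sigma> \<in> \<iota>c ` cells K' E P (Suc q)"
proof -
  obtain w Ts where w: "\<sigma> = map (rac_coset S E w) Ts" "w \<in> GL" "Ts \<in> chamber_chains P (Suc q)"
    using \<sigma> unfolding cells_def by blast
  have iT: "i < length Ts" using i w(1) by simp
  have Ts2: "del_nth i Ts \<in> chamber_chains P q" by (rule chains_del[OF w(3) iT])
  then have Ts2': "del_nth i Ts \<noteq> []" "set (del_nth i Ts) \<subseteq> P" unfolding chamber_chains_def by auto
  obtain \<tau> where \<tau>: "\<tau> \<in> cells K' E P q" "del_nth i \<sigma> = \<iota>c \<tau>" using d by blast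
  have "map (rac_coset S E w) (del_nth i Ts) = \<iota>c \<tau>" using \<tau>(2) w(1) del_nth_map by metis
  then have "w \<in> \<iota> ` GK" using inB[OF w(2) Ts2' _ \<tau>(1)] by blast
  then show ?thesis using block_char[OF w(2) w(3)] w(1) by simp
qed

lemma iotac_del: "del_nth i (\<iota>c \<sigma>) = \<iota>c (del_nth i \<sigma>)"
  unfolding \<iota>c_def by (rule del_nth_map)

lemma iotac_length: "length (\<iota>c \<sigma>) = length \<sigma>"
  unfolding \<iota>c_def by simp

lemma deg_iota:
  assumes \<sigma>: "\<sigma> \<in> cells K' E P q"
  shows "cell_deg S E (\<iota>c \<sigma>) = cell_deg K' E \<sigma>"
proof -
  have ne: "\<sigma> \<noteq> []" using \<sigma> unfolding cells_def chamber_chains_def by auto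
  have "(\<lambda>n. \<exists>w\<in>GL. (\<forall>C\<in>set (\<iota>c \<sigma>). w \<in> C) \<and> rac_len S E w = n)
      = (\<lambda>n. \<exists>h\<in>GK. (\<forall>C\<in>set \<sigma>. h \<in> C) \<and> rac_len K' E h = n)"
  proof (rule ext, rule iffI)
    fix n assume "\<exists>w\<in>GL. (\<forall>C\<in>set (\<iota>c \<sigma>). w \<in> C) \<and> rac_len S E w = n"
    then obtain w where w: "w \<in> GL" "\<forall>C\<in>set (\<iota>c \<sigma>). w \<in> C" "rac_len S E w = n" by blast
    have "hd \<sigma> \<in> set \<sigma>" using ne by simp
    then have "\<iota> ` hd \<sigma> \<in> set (\<iota>c \<sigma>)" unfolding \<iota>c_def by simp
    then have "w \<in> \<iota> ` hd \<sigma>" using w(2) by blast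
    then obtain h where h: "h \<in> hd \<sigma>" "w = \<iota> h" by blast
    have hG: "h \<in> GK" using cellsK_sub[OF \<sigma> \<open>hd \<sigma> \<in> set \<sigma>\<close>] h(1) by blast
    have "\<forall>C\<in>set \<sigma>. h \<in> C"
    proof
      fix C assume C: "C \<in> set \<sigma>"
      then have "\<iota> ` C \<in> set (\<iota>c \<sigma>)" unfolding \<iota>c_def by simp
      then have "\<iota> h \<in> \<iota> ` C" using w(2) h(2) by blast
      then obtain h' where h': "h' \<in> C" "\<iota> h = \<iota> h'" by blast
      have "h' \<in> GK" using cellsK_sub[OF \<sigma> C] h'(1) by blast
      then have "h = h'" using inj_onD[OF iota_inj h'(2) hG] by simp
      then show "h \<in> C" using h'(1) by simp
    qed
    moreover have "rac_len K' E h = n" using iota_len[OF hG] h(2) w(3) by simp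
    ultimately show "\<exists>h\<in>GK. (\<forall>C\<in>set \<sigma>. h \<in> C) \<and> rac_len K' E h = n" using hG by blast
  next
    fix n assume "\<exists>h\<in>GK. (\<forall>C\<in>set \<sigma>. h \<in> C) \<and> rac_len K' E h = n"
    then obtain h where h: "h \<in> GK" "\<forall>C\<in>set \<sigma>. h \<in> C" "rac_len K' E h = n" by blast
    have "\<forall>C\<in>set (\<iota>c \<sigma>). \<iota> h \<in> C" using h(2) unfolding \<iota>c_def by auto
    moreover have "rac_len S E (\<iota> h) = n" using iota_len[OF h(1)] h(3) by simp
    ultimately show "\<exists>w\<in>GL. (\<forall>C\<in>set (\<iota>c \<sigma>). w \<in> C) \<and> rac_len S E w = n" using iota_G[OF h(1)] by blast
  qed
  then show ?thesis unfolding cell_deg_def by simp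
qed

lemma cob_trans:
  assumes FK: "\<And>\<tau>. \<tau> \<in> cells K' E P q \<Longrightarrow> FL (\<iota>c \<tau>) = FK \<tau>" and \<sigma>: "\<sigma> \<in> cells K' E P (Suc q)"
  shows "cob FL (\<iota>c \<sigma>) = cob FK \<sigma>"
  unfolding cob_def iotac_length
proof (rule sum.cong)
  fix i assume "i \<in> {..<length \<sigma>}"
  then have "del_nth i \<sigma> \<in> cells K' E P q" using cells_face[OF \<sigma>] by simp
  then show "(-1) ^ i * FL (del_nth i (\<iota>c \<sigma>)) = (-1) ^ i * FK (del_nth i \<sigma>)"
    using FK by (simp add: iotac_del)
qed simp

lemma bd_trans:
  assumes FK: "\<And>\<tau>. \<tau> \<in> cells K' E P q \<Longrightarrow> FL (\<iota>c \<tau>) = FK \<tau>"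
    and q0: "0 < q" and \<eta>: "\<eta> \<in> cells K' E P (q - 1)"
  shows "bd_t S E P t q FL (\<iota>c \<eta>) = bd_t K' E P t q FK \<eta>"
proof -
  have qq: "q = Suc (q - 1)" using q0 by simp
  let ?XL = "{(\<sigma>, i). \<sigma> \<in> cells S E P q \<and> i < length \<sigma> \<and> del_nth i \<sigma> = \<iota>c \<eta>}"
  let ?XK = "{(\<sigma>, i). \<sigma> \<in> cells K' E P q \<and> i < length \<sigma> \<and> del_nth i \<sigma> = \<eta>}"
  let ?m = "\<lambda>(\<sigma>::'a list set set list, i::nat). (\<iota>c \<sigma>, i)"
  have XL: "?XL = ?m ` ?XK"
  proof (rule set_eqI, rule iffI)
    fix x assume x: "x \<in> ?XL"
    then obtain \<sigma>' i where x': "x = (\<sigma>', i)" "\<sigma>' \<in> cells S E P q" "i < length \<sigma>'" "del_nth i \<sigma>' = \<iota>c \<eta>" by blast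
    have "\<sigma>' \<in> cells S E P (Suc (q - 1))" using x'(2) qq by simp
    moreover have "del_nth i \<sigma>' \<in> \<iota>c ` cells K' E P (q - 1)" using x'(4) \<eta> by blast
    ultimately have "\<sigma>' \<in> \<iota>c ` cells K' E P (Suc (q - 1))" using coface x'(3) by blast
    then obtain \<sigma> where \<sigma>: "\<sigma> \<in> cells K' E P q" "\<sigma>' = \<iota>c \<sigma>" using qq by auto
    have il: "i < length \<sigma>" using x'(3) \<sigma>(2) iotac_length by simp
    have "\<sigma> \<in> cells K' E P (Suc (q - 1))" using \<sigma>(1) qq by simp
    then have dK: "del_nth i \<sigma> \<in> cells K' E P (q - 1)" using cells_face il by blast
    have "\<iota>c (del_nth i \<sigma>) = \<iota>c \<eta>" using x'(4) \<sigma>(2) iotac_del by simp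
    then have "del_nth i \<sigma> = \<eta>" using iotac_inj[OF dK \<eta>] by blast
    then have "(\<sigma>, i) \<in> ?XK" using \<sigma>(1) il by blast
    then show "x \<in> ?m ` ?XK" using x'(1) \<sigma>(2) by force
  next
    fix x assume "x \<in> ?m ` ?XK"
    then obtain y where y: "y \<in> ?XK" "x = ?m y" by (rule imageE)
    obtain \<sigma> i where yi: "y = (\<sigma>, i)" by (cases y)
    have s: "\<sigma> \<in> cells K' E P q" "i < length \<sigma>" "del_nth i \<sigma> = \<eta>" using y(1) yi by auto
    have xe: "x = (\<iota>c \<sigma>, i)" using y(2) yi by simp
    show "x \<in> ?XL" using cellsK_L[OF s(1)] iotac_length[of \<sigma>] iotac_del[of i \<sigma>] s xe by auto
  qed
  have inj: "inj_on ?m ?XK"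
  proof (rule inj_onI)
    fix x y assume x: "x \<in> ?XK" and y: "y \<in> ?XK" and eq: "?m x = ?m y"
    obtain \<sigma>1 i1 where 1: "x = (\<sigma>1, i1)" "\<sigma>1 \<in> cells K' E P q" using x by blast
    obtain \<sigma>2 i2 where 2: "y = (\<sigma>2, i2)" "\<sigma>2 \<in> cells K' E P q" using y by blast
    have "\<iota>c \<sigma>1 = \<iota>c \<sigma>2" "i1 = i2" using eq 1 2 by auto
    then show "x = y" using iotac_inj[OF 1(2) 2(2)] 1 2 by simp
  qed
  have "bd_t S E P t q FL (\<iota>c \<eta>) = (\<Sum>x\<in>?m ` ?XK. (case x of (\<sigma>, i) \<Rightarrow> (-1) ^ i * t powr (real (cell_deg S E \<sigma>) - real (cell_deg S E (\<iota>c \<eta>))) * FL \<sigma>))"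
    unfolding bd_t_def XL ..
  also have "\<dots> = (\<Sum>x\<in>?XK. (case ?m x of (\<sigma>, i) \<Rightarrow> (-1) ^ i * t powr (real (cell_deg S E \<sigma>) - real (cell_deg S E (\<iota>c \<eta>))) * FL \<sigma>))"
    by (rule sum.reindex[OF inj, unfolded comp_def])
  also have "\<dots> = (\<Sum>x\<in>?XK. (case x of (\<sigma>, i) \<Rightarrow> (-1) ^ i * t powr (real (cell_deg K' E \<sigma>) - real (cell_deg K' E \<eta>)) * FK \<sigma>))"
  proof (rule sum.cong)
    fix x assume x: "x \<in> ?XK"
    then obtain \<sigma> i where s: "x = (\<sigma>, i)" "\<sigma> \<in> cells K' E P q" by blast
    show "(case ?m x of (\<sigma>, i) \<Rightarrow> (-1) ^ i * t powr (real (cell_deg S E \<sigma>) - real (cell_deg S E (\<iota>c \<eta>))) * FL \<sigma>)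
        = (case x of (\<sigma>, i) \<Rightarrow> (-1) ^ i * t powr (real (cell_deg K' E \<sigma>) - real (cell_deg K' E \<eta>)) * FK \<sigma>)"
      using s deg_iota[OF s(2)] deg_iota[OF \<eta>] FK[OF s(2)] by simp
  qed simp
  also have "\<dots> = bd_t K' E P t q FK \<eta>" unfolding bd_t_def ..
  finally show ?thesis .
qed

end

context rtrans
begin

definition "up q f \<sigma> = (if \<sigma> \<in> \<iota>c ` cells K' E P q then f (inv_into (cells K' E P q) \<iota>c \<sigma>) else 0)"
definition "down q g \<tau> = (if \<tau> \<in> cells K' E P q then g (\<iota>c \<tau>) else 0)"
definition "ext y p = (if snd p \<in> \<iota> ` GK then y (fst p, inv_into GK \<iota> (snd p)) else 0)"

lemma iotac_inj_on: "inj_on \<iota>c (cells K' E P q)"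
  by (rule inj_onI) (rule iotac_inj)

lemma up_iota: "\<tau> \<in> cells K' E P q \<Longrightarrow> up q f (\<iota>c \<tau>) = f \<tau>"
  unfolding up_def using inv_into_f_f[OF iotac_inj_on] by simp

lemma up_out: "\<sigma> \<notin> \<iota>c ` cells K' E P q \<Longrightarrow> up q f \<sigma> = 0"
  unfolding up_def by simp

lemma up_harm:
  assumes f: "f \<in> harmonic K' E P t q"
  shows "up q f \<in> harmonic S E P t q"
proof -
  have fl: "f \<in> l2_cochains K' E P t q" using f unfolding harmonic_def by blast
  have fs: "(\<lambda>\<tau>. f \<tau> * f \<tau> * t ^ cell_deg K' E \<tau>) summable_on cells K' E P q"
    using fl unfolding K.l2_iff l2w_def by blast
  let ?g = "\<lambda>\<sigma>. up q f \<sigma> * up q f \<sigma> * t ^ cell_deg S E \<sigma>"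
  have sub: "\<iota>c ` cells K' E P q \<subseteq> cells S E P q" using cellsK_L by blast
  have "(?g \<circ> \<iota>c) summable_on cells K' E P q"
  proof -
    have "\<And>\<tau>. \<tau> \<in> cells K' E P q \<Longrightarrow> (?g \<circ> \<iota>c) \<tau> = f \<tau> * f \<tau> * t ^ cell_deg K' E \<tau>"
    proof -
      fix \<tau> assume \<tau>: "\<tau> \<in> cells K' E P q"
      show "(?g \<circ> \<iota>c) \<tau> = f \<tau> * f \<tau> * t ^ cell_deg K' E \<tau>"
        using up_iota[OF \<tau>, of f] deg_iota[OF \<tau>] by simp
    qed
    then have "(?g \<circ> \<iota>c) summable_on cells K' E P q \<longleftrightarrow> (\<lambda>\<tau>. f \<tau> * f \<tau> * t ^ cell_deg K' E \<tau>) summable_on cells K' E P q"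
      by (rule summable_on_cong)
    then show ?thesis using fs by simp
  qed
  then have "?g summable_on \<iota>c ` cells K' E P q" using summable_on_reindex[OF iotac_inj_on] by blast
  moreover have "?g summable_on cells S E P q \<longleftrightarrow> ?g summable_on \<iota>c ` cells K' E P q"
  proof (rule summable_on_cong_neutral)
    fix x assume "x \<in> \<iota>c ` cells K' E P q - cells S E P q"
    then show "?g x = 0" using sub by blast
  next
    fix x assume "x \<in> cells S E P q - \<iota>c ` cells K' E P q"
    then have "up q f x = 0" using up_out[of x q f] by blast
    then show "?g x = 0" by simp
  qed simp
  ultimately have gs: "?g summable_on cells S E P q" by simp
  have l2: "up q f \<in> l2_cochains S E P t q"
    unfolding L.l2_iff l2w_def using gs sub up_out by blast
  have cobz: "cob (up q f) \<sigma> = 0" if \<sigma>: "\<sigma> \<in> cells S E P (Suc q)" for \<sigma>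
  proof (cases "\<sigma> \<in> \<iota>c ` cells K' E P (Suc q)")
    case True
    then obtain \<tau> where \<tau>: "\<tau> \<in> cells K' E P (Suc q)" "\<sigma> = \<iota>c \<tau>" by blast
    have "cob (up q f) (\<iota>c \<tau>) = cob f \<tau>" by (rule cob_trans[where FL="up q f" and FK=f and q=q, OF up_iota \<tau>(1)])
    also have "cob f \<tau> = 0" using f \<tau>(1) unfolding harmonic_def by blast
    finally show ?thesis using \<tau>(2) by simp
  next
    case False
    have "\<And>i. i < length \<sigma> \<Longrightarrow> up q f (del_nth i \<sigma>) = 0"
    proof -
      fix i assume i: "i < length \<sigma>"
      have "del_nth i \<sigma> \<notin> \<iota>c ` cells K' E P q" using coface[OF \<sigma> i] False by blast
      then show "up q f (del_nth i \<sigma>) = 0" by (rule up_out)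
    qed
    then show ?thesis unfolding cob_def by simp
  qed
  have bdz: "bd_t S E P t q (up q f) \<eta> = 0" if q0: "0 < q" and \<eta>: "\<eta> \<in> cells S E P (q - 1)" for \<eta>
  proof (cases "\<eta> \<in> \<iota>c ` cells K' E P (q - 1)")
    case True
    then obtain \<eta>' where \<eta>': "\<eta>' \<in> cells K' E P (q - 1)" "\<eta> = \<iota>c \<eta>'" by blast
    have "bd_t S E P t q (up q f) (\<iota>c \<eta>') = bd_t K' E P t q f \<eta>'" by (rule bd_trans[where FL="up q f" and FK=f and q=q, OF up_iota q0 \<eta>'(1)])
    also have "\<dots> = 0" using f q0 \<eta>'(1) unfolding harmonic_def by blast
    finally show ?thesis using \<eta>'(2) by simp
  next
    case False
    have qq: "q = Suc (q - 1)" using q0 by simp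
    show ?thesis unfolding bd_t_def
    proof (rule sum.neutral, rule ballI)
      fix x assume x: "x \<in> {(\<sigma>, i). \<sigma> \<in> cells S E P q \<and> i < length \<sigma> \<and> del_nth i \<sigma> = \<eta>}"
      then obtain \<sigma> i where s: "x = (\<sigma>, i)" "\<sigma> \<in> cells S E P q" "i < length \<sigma>" "del_nth i \<sigma> = \<eta>" by blast
      have "\<sigma> \<notin> \<iota>c ` cells K' E P q"
      proof
        assume "\<sigma> \<in> \<iota>c ` cells K' E P q"
        then obtain \<tau> where \<tau>: "\<tau> \<in> cells K' E P q" "\<sigma> = \<iota>c \<tau>" by blast
        have "\<tau> \<in> cells K' E P (Suc (q - 1))" using \<tau>(1) qq by simp
        moreover have "i < length \<tau>" using s(3) \<tau>(2) iotac_length by simp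
        ultimately have "del_nth i \<tau> \<in> cells K' E P (q - 1)" by (rule cells_face)
        moreover have "\<eta> = \<iota>c (del_nth i \<tau>)" using s(4) \<tau>(2) iotac_del by simp
        ultimately show False using False by blast
      qed
      then have "up q f \<sigma> = 0" by (rule up_out)
      then show "(case x of (\<sigma>, i) \<Rightarrow> (-1) ^ i * t powr (real (cell_deg S E \<sigma>) - real (cell_deg S E \<eta>)) * up q f \<sigma>) = 0"
        using s(1) by simp
    qed
  qed
  show ?thesis unfolding harmonic_def using l2 cobz bdz by blast
qed

lemma down_harm:
  assumes g: "g \<in> harmonic S E P t q"
  shows "down q g \<in> harmonic K' E P t q"
proof -
  have gl: "g \<in> l2_cochains S E P t q" using g unfolding harmonic_def by blast
  let ?h = "\<lambda>\<sigma>. g \<sigma> * g \<sigma> * t ^ cell_deg S E \<sigma>"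
  have gs: "?h summable_on cells S E P q" using gl unfolding L.l2_iff l2w_def by blast
  have sub: "\<iota>c ` cells K' E P q \<subseteq> cells S E P q" using cellsK_L by blast
  have "?h summable_on \<iota>c ` cells K' E P q" by (rule summable_on_subset[OF gs sub])
  then have hs: "(?h \<circ> \<iota>c) summable_on cells K' E P q" using summable_on_reindex[OF iotac_inj_on] by blast
  have "(\<lambda>\<tau>. down q g \<tau> * down q g \<tau> * t ^ cell_deg K' E \<tau>) summable_on cells K' E P q"
  proof -
    have "\<And>\<tau>. \<tau> \<in> cells K' E P q \<Longrightarrow> (?h \<circ> \<iota>c) \<tau> = down q g \<tau> * down q g \<tau> * t ^ cell_deg K' E \<tau>"
      using deg_iota by (simp add: down_def)
    then have "(?h \<circ> \<iota>c) summable_on cells K' E P q \<longleftrightarrow> (\<lambda>\<tau>. down q g \<tau> * down q g \<tau> * t ^ cell_deg K' E \<tau>) summable_on cells K' E P q"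
      by (rule summable_on_cong)
    then show ?thesis using hs by simp
  qed
  then have l2: "down q g \<in> l2_cochains K' E P t q" unfolding K.l2_iff l2w_def by (simp add: down_def)
  have dg: "\<And>\<tau>. \<tau> \<in> cells K' E P q \<Longrightarrow> g (\<iota>c \<tau>) = down q g \<tau>" by (simp add: down_def)
  have cobz: "cob (down q g) \<tau> = 0" if \<tau>: "\<tau> \<in> cells K' E P (Suc q)" for \<tau>
  proof -
    have "cob g (\<iota>c \<tau>) = cob (down q g) \<tau>" by (rule cob_trans[where FL=g and FK="down q g" and q=q, OF dg \<tau>])
    moreover have "cob g (\<iota>c \<tau>) = 0" using g cellsK_L[OF \<tau>] unfolding harmonic_def by blast
    ultimately show ?thesis by simp
  qed
  have bdz: "bd_t K' E P t q (down q g) \<eta> = 0" if q0: "0 < q" and \<eta>: "\<eta> \<in> cells K' E P (q - 1)" for \<eta>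
  proof -
    have "bd_t S E P t q g (\<iota>c \<eta>) = bd_t K' E P t q (down q g) \<eta>" by (rule bd_trans[where FL=g and FK="down q g" and q=q, OF dg q0 \<eta>])
    moreover have "bd_t S E P t q g (\<iota>c \<eta>) = 0" using g q0 cellsK_L[OF \<eta>] unfolding harmonic_def by blast
    ultimately show ?thesis by simp
  qed
  show ?thesis unfolding harmonic_def using l2 cobz bdz by blast
qed

lemma poincare_eq:
  assumes T: "T \<in> P" shows "poincare S E T t = poincare K' E T t"
proof -
  have TK: "T \<subseteq> K'" by (rule PK[OF T])
  have sp: "special S E T = \<iota> ` special K' E T"
  proof -
    have "\<And>ys. ys \<in> lists T \<Longrightarrow> \<iota> (rac_cls K' E ys) = rac_cls S E ys" using TK by (intro iota_cls) auto
    then show ?thesis unfolding special_def by (auto simp: image_iff)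
  qed
  have spK: "special K' E T \<subseteq> GK" unfolding special_def rac_grp_def using TK by auto
  have inj: "inj_on \<iota> (special K' E T)" using inj_on_subset[OF iota_inj spK] .
  have "poincare S E T t = (\<Sum>u\<in>\<iota> ` special K' E T. t ^ rac_len S E u)" unfolding poincare_def sp ..
  also have "\<dots> = (\<Sum>u\<in>special K' E T. t ^ rac_len S E (\<iota> u))" by (rule sum.reindex_cong[OF inj refl]) simp
  also have "\<dots> = (\<Sum>u\<in>special K' E T. t ^ rac_len K' E u)" using spK iota_len by (intro sum.cong) auto
  finally show ?thesis unfolding poincare_def .
qed

lemma cc_eq: "Ts \<in> chamber_chains P q \<Longrightarrow> L.cc Ts = K.cc Ts"
proof -
  assume "Ts \<in> chamber_chains P q"
  then have "Ts \<noteq> [] \<and> set Ts \<subseteq> P" by (rule L.chn_ne)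
  then have "hd Ts \<in> P" by (cases Ts) auto
  then show ?thesis unfolding L.cc_def K.cc_def using poincare_eq by simp
qed

lemma inv_iota: "h \<in> GK \<Longrightarrow> inv_into GK \<iota> (\<iota> h) = h"
  by (rule inv_into_f_f[OF iota_inj])

lemma embed_up:
  assumes f: "f \<in> l2_cochains K' E P t q"
  shows "embed S E P t q (up q f) = ext (embed K' E P t q f)"
proof (rule ext)
  fix p :: "'a set list \<times> 'a list set"
  obtain Ts w where p: "p = (Ts, w)" by (cases p)
  show "embed S E P t q (up q f) p = ext (embed K' E P t q f) p"
  proof (cases "w \<in> \<iota> ` GK")
    case True
    then obtain h where h: "h \<in> GK" "w = \<iota> h" by blast
    have eh: "ext (embed K' E P t q f) p = embed K' E P t q f (Ts, h)"
      unfolding ext_def using p h inv_iota by simp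
    show ?thesis
    proof (cases "Ts \<in> chamber_chains P q")
      case True
      have Ts': "set Ts \<subseteq> P" using True unfolding chamber_chains_def by blast
      have mK: "map (rac_coset K' E h) Ts \<in> cells K' E P q" unfolding cells_def using h(1) True by blast
      have "map (rac_coset S E w) Ts = \<iota>c (map (rac_coset K' E h) Ts)" using iota_cell[OF h(1) Ts'] h(2) by simp
      then have "up q f (map (rac_coset S E w) Ts) = f (map (rac_coset K' E h) Ts)" using up_iota[OF mK] by simp
      then show ?thesis using eh p True h iota_G[OF h(1)] cc_eq[OF True] by (simp add: L.embed_eq K.embed_eq)
    next
      case False
      then show ?thesis using eh p by (simp add: L.embed_eq K.embed_eq)
    qed
  next
    case False
    have eh: "ext (embed K' E P t q f) p = 0" unfolding ext_def using p False by simp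
    show ?thesis
    proof (cases "p \<in> chamber_chains P q \<times> GL")
      case True
      then have "map (rac_coset S E w) Ts \<notin> \<iota>c ` cells K' E P q" using block_char False p by auto
      then have "up q f (map (rac_coset S E w) Ts) = 0" by (rule up_out)
      then show ?thesis using eh p True by (simp add: L.embed_eq)
    next
      case False
      then show ?thesis using eh by (simp add: L.embed_eq)
    qed
  qed
qed

lemma embed_down:
  assumes h: "h \<in> GK"
  shows "embed K' E P t q (down q g) (Ts, h) = embed S E P t q g (Ts, \<iota> h)"
proof (cases "Ts \<in> chamber_chains P q")
  case True
  have Ts': "set Ts \<subseteq> P" using True unfolding chamber_chains_def by blast
  have mK: "map (rac_coset K' E h) Ts \<in> cells K' E P q" unfolding cells_def using h True by blast
  have "\<iota>c (map (rac_coset K' E h) Ts) = map (rac_coset S E (\<iota> h)) Ts" by (rule iota_cell[OF h Ts'])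
  then show ?thesis using True h iota_G[OF h] cc_eq[OF True] mK by (simp add: L.embed_eq K.embed_eq down_def)
next
  case False
  then show ?thesis by (simp add: L.embed_eq K.embed_eq)
qed

lemma hecke_ext:
  "hecke_ip S E P t q (ext a) b = hecke_ip K' E P t q a (\<lambda>p. b (fst p, \<iota> (snd p)))"
proof -
  let ?m = "\<lambda>p::'a set list \<times> 'a list set. (fst p, \<iota> (snd p))"
  let ?g = "\<lambda>p. ext a p * b p * L.wt p"
  have inj: "inj_on ?m (chamber_chains P q \<times> GK)"
    using iota_inj by (auto simp: inj_on_def)
  have img: "?m ` (chamber_chains P q \<times> GK) = chamber_chains P q \<times> \<iota> ` GK" by force
  have sub: "chamber_chains P q \<times> \<iota> ` GK \<subseteq> chamber_chains P q \<times> GL" using iota_G by auto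
  have "hecke_ip S E P t q (ext a) b = infsum ?g (chamber_chains P q \<times> GL)"
    unfolding L.hecke_ipw ipw_def ..
  also have "\<dots> = infsum ?g (chamber_chains P q \<times> \<iota> ` GK)"
    by (rule infsum_cong_neutral) (use sub in \<open>auto simp: ext_def\<close>)
  also have "\<dots> = infsum (?g \<circ> ?m) (chamber_chains P q \<times> GK)"
    unfolding img[symmetric] by (rule infsum_reindex[OF inj])
  also have "\<dots> = infsum (\<lambda>p. a p * b (fst p, \<iota> (snd p)) * K.wt p) (chamber_chains P q \<times> GK)"
  proof (rule infsum_cong)
    fix p assume p: "p \<in> chamber_chains P q \<times> GK"
    then have hG: "snd p \<in> GK" by (auto simp: mem_Times_iff)
    then show "(?g \<circ> ?m) p = a p * b (fst p, \<iota> (snd p)) * K.wt p"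
      using inv_iota[OF hG] iota_len[OF hG] by (simp add: ext_def L.wt_def K.wt_def)
  qed
  also have "\<dots> = hecke_ip K' E P t q a (\<lambda>p. b (fst p, \<iota> (snd p)))"
    unfolding K.hecke_ipw ipw_def ..
  finally show ?thesis .
qed

lemma hecke_congK:
  assumes "\<And>p. p \<in> chamber_chains P q \<times> GK \<Longrightarrow> b1 p = b2 p"
  shows "hecke_ip K' E P t q a b1 = hecke_ip K' E P t q a b2"
  unfolding K.hecke_ipw ipw_def using assms by (intro infsum_cong) simp

lemma delta_ext: "delta_one S E Ts0 = ext (delta_one K' E Ts0)"
proof (rule ext)
  fix p :: "'a set list \<times> 'a list set"
  obtain Ts w where p: "p = (Ts, w)" by (cases p)
  show "delta_one S E Ts0 p = ext (delta_one K' E Ts0) p"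
  proof (cases "w \<in> \<iota> ` GK")
    case True
    then obtain h where h: "h \<in> GK" "w = \<iota> h" by blast
    have "\<iota> h = rac_one S E \<longleftrightarrow> h = rac_one K' E"
      using inj_onD[OF iota_inj _ h(1) one_K] iota_one by auto
    then show ?thesis unfolding ext_def delta_one_def using p h inv_iota by simp
  next
    case False
    have "rac_one S E \<in> \<iota> ` GK" using iota_one one_K by force
    then have "w \<noteq> rac_one S E" using False by blast
    then show ?thesis unfolding ext_def delta_one_def using p False by simp
  qed
qed

lemma summand_eq:
  assumes Ts0: "Ts0 \<in> chamber_chains P q"
  shows "hecke_ip S E P t q (orth_proj (hecke_ip S E P t q) (embed S E P t q ` harmonic S E P t q) (delta_one S E Ts0)) (delta_one S E Ts0)
       = hecke_ip K' E P t q (orth_proj (hecke_ip K' E P t q) (embed K' E P t q ` harmonic K' E P t q) (delta_one K' E Ts0)) (delta_one K' E Ts0)"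
proof -
  let ?xK = "delta_one K' E Ts0" and ?xL = "delta_one S E Ts0"
  obtain y0 where y0: "y0 \<in> embed K' E P t q ` harmonic K' E P t q"
    "\<forall>h\<in>embed K' E P t q ` harmonic K' E P t q. hecke_ip K' E P t q (\<lambda>p. ?xK p - y0 p) h = 0"
    using K.sol_ex[OF K.delta_l2] by blast
  have pK: "orth_proj (hecke_ip K' E P t q) (embed K' E P t q ` harmonic K' E P t q) ?xK = y0"
    by (rule K.orth_proj_eq[OF K.delta_l2 y0])
  obtain f where f: "f \<in> harmonic K' E P t q" "y0 = embed K' E P t q f" using y0(1) by blast
  have fl: "f \<in> l2_cochains K' E P t q" using f(1) unfolding harmonic_def by blast
  define yL where "yL = ext y0"
  have yLM: "yL \<in> embed S E P t q ` harmonic S E P t q"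
    unfolding yL_def f(2) embed_up[OF fl, symmetric] using up_harm[OF f(1)] by blast
  have dif: "(\<lambda>p. ?xL p - yL p) = ext (\<lambda>p. ?xK p - y0 p)"
    unfolding yL_def delta_ext by (rule ext) (simp add: ext_def)
  have orthL: "\<forall>h\<in>embed S E P t q ` harmonic S E P t q. hecke_ip S E P t q (\<lambda>p. ?xL p - yL p) h = 0"
  proof
    fix h assume "h \<in> embed S E P t q ` harmonic S E P t q"
    then obtain g where g: "g \<in> harmonic S E P t q" "h = embed S E P t q g" by blast
    have "hecke_ip S E P t q (\<lambda>p. ?xL p - yL p) h = hecke_ip K' E P t q (\<lambda>p. ?xK p - y0 p) (\<lambda>p. h (fst p, \<iota> (snd p)))"
      unfolding dif by (rule hecke_ext)
    also have "\<dots> = hecke_ip K' E P t q (\<lambda>p. ?xK p - y0 p) (embed K' E P t q (down q g))"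
    proof (rule hecke_congK)
      fix p assume p: "p \<in> chamber_chains P q \<times> GK"
      obtain Ts k where pk: "p = (Ts, k)" by (cases p)
      have "k \<in> GK" using p pk by auto
      then show "h (fst p, \<iota> (snd p)) = embed K' E P t q (down q g) p"
        using embed_down[of k q g Ts] g(2) pk by simp
    qed
    also have "\<dots> = 0" using y0(2) down_harm[OF g(1)] by blast
    finally show "hecke_ip S E P t q (\<lambda>p. ?xL p - yL p) h = 0" .
  qed
  have pL: "orth_proj (hecke_ip S E P t q) (embed S E P t q ` harmonic S E P t q) ?xL = yL"
    by (rule L.orth_proj_eq[OF L.delta_l2 yLM orthL])
  have "hecke_ip S E P t q yL ?xL = hecke_ip K' E P t q y0 (\<lambda>p. ?xL (fst p, \<iota> (snd p)))"
    unfolding yL_def by (rule hecke_ext)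
  also have "\<dots> = hecke_ip K' E P t q y0 ?xK"
  proof (rule hecke_congK)
    fix p assume p: "p \<in> chamber_chains P q \<times> GK"
    then have "snd p \<in> GK" by (auto simp: mem_Times_iff)
    then show "?xL (fst p, \<iota> (snd p)) = ?xK p"
      unfolding delta_ext ext_def using inv_iota by simp
  qed
  finally show ?thesis using pK pL by simp
qed

lemma betti_eq: "l2_betti S E P t q = l2_betti K' E P t q"
  unfolding l2_betti_def Let_def by (rule sum.cong[OF refl summand_eq])

end

theorem proposition8p4:
  fixes S :: "'a set" and E :: "'a \<Rightarrow> 'a \<Rightarrow> bool" and K :: "'a set set"
    and t :: real and q :: nat
  assumes "finite S"
    and "\<And>s u. E s u \<Longrightarrow> s \<in> S \<and> u \<in> S"
    and "\<And>s u. E s u \<Longrightarrow> E u s"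
    and "\<And>s. \<not> E s s"
    and "full_subcomplex K (nerve S E)"
    and "t > 0"
  shows "l2_betti S E (insert {} K) t q = l2_betti (\<Union>K) E (insert {} K) t q"
proof -
  have Kn: "K \<subseteq> nerve S E" using assms(5) unfolding full_subcomplex_def subcomplex_def by blast
  have KP: "\<And>T. T \<in> K \<Longrightarrow> T \<subseteq> S \<and> (\<forall>s\<in>T. \<forall>u\<in>T. s \<noteq> u \<longrightarrow> E s u)"
    using Kn unfolding nerve_def by blast
  have KPow: "K \<subseteq> Pow S" using KP by blast
  have finK: "finite K" using finite_subset[OF KPow] assms(1) by simp
  have US: "\<Union>K \<subseteq> S" using KP by blast
  have finU: "finite (\<Union>K)" using finite_subset[OF US assms(1)] .
  have r1: "racg S E (insert {} K) t"
  proof (rule racg.intro)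
    show "finite S" by (rule assms(1))
    show "finite (insert {} K)" using finK by simp
    show "\<And>T. T \<in> insert {} K \<Longrightarrow> T \<subseteq> S" using KP by blast
    show "\<And>T s u. T \<in> insert {} K \<Longrightarrow> s \<in> T \<Longrightarrow> u \<in> T \<Longrightarrow> s \<noteq> u \<Longrightarrow> E s u" using KP by blast
    show "0 < t" by (rule assms(6))
  qed
  have r2: "racg (\<Union>K) E (insert {} K) t"
  proof (rule racg.intro)
    show "finite (\<Union>K)" by (rule finU)
    show "finite (insert {} K)" using finK by simp
    show "\<And>T. T \<in> insert {} K \<Longrightarrow> T \<subseteq> \<Union>K" by blast
    show "\<And>T s u. T \<in> insert {} K \<Longrightarrow> s \<in> T \<Longrightarrow> u \<in> T \<Longrightarrow> s \<noteq> u \<Longrightarrow> E s u" using KP by blast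
    show "0 < t" by (rule assms(6))
  qed
  interpret R: rtrans S E "insert {} K" t "\<Union>K"
  proof (intro rtrans.intro rtrans_axioms.intro r1 r2)
    show "\<Union>K \<subseteq> S" by (rule US)
    show "\<And>T. T \<in> insert {} K \<Longrightarrow> T \<subseteq> \<Union>K" by blast
  qed
  show ?thesis by (rule R.betti_eq)
qed

end
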